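(* Let $H$ be a $k$-linear semi-Hopf category and $A$ a right $H$-comodule category with $B=A^{{\rm co}H}$. Assume that (1) each $A_{xy}$ is a finitely generated projective left $B_x$-module; (2) each $H_{xy}$ is a finitely generated projective $k$-module; (3) for all $x,y\in X$ the maps $\delta^x_{xy}:{\rm Hom}_k(H_{xy},A_{yx})\to{}_{B_x}{\rm Hom}(A_{xy},A_{xx})$ and $\delta^x_{yy}:{\rm Hom}_k(H_{xy},A_{yy})\to{}_{B_x}{\rm Hom}(A_{xy},A_{xy})$, given by $\delta(g)(a)=a_{[0]}g(a_{[1]})$, are bijective. Then $A$ is an $H$-Galois category extension of $B$, i.e. all maps ${\rm can}^z_{xy}$ are bijective.
   Context: Let $k$ be a commutative ring; unadorned $\otimes$ is over $k$. A $k$-linear category $A$ with class of objects $X$ consists of $k$-modules $A_{xy}$, associative compositions $A_{xy}\otimes A_{yz}\to A_{xz}$, $a\otimes b\mapsto ab$, and units $1_x\in A_{xx}$. A $k$-linear semi-Hopf category $H$ (objects $X$) is a $k$-linear category in which each $H_{xy}$ is a $k$-coalgebra with $\Delta_{xy}(h)=h_{(1)}\otimes h_{(2)}$ and counit $\varepsilon_{xy}$, such that $\Delta_{xz}(hh')=h_{(1)}h'_{(1)}\otimes h_{(2)}h'_{(2)}$, $\Delta_{xx}(1_x)=1_x\otimes1_x$, $\varepsilon_{xz}(hh')=\varepsilon_{xy}(h)\varepsilon_{yz}(h')$, $\varepsilon_{xx}(1_x)=1$. A right $H$-comodule category is a $k$-linear category $A$ with objects $X$ such that each $A_{xy}$ is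 a right $H_{xy}$-comodule, $\rho_{xy}(a)=a_{[0]}\otimes a_{[1]}$, with $\rho_{xz}(ab)=a_{[0]}b_{[0]}\otimes a_{[1]}b_{[1]}$ and $\rho_{xx}(1_x)=1_x\otimes1_x$. Its coinvariants are $B_x=\{a\in A_{xx}\mid\rho_{xx}(a)=a\otimes1_x\}$; $A_{xy}$ is a $B_x$-$B_y$-bimodule by multiplication. The canonical maps are ${\rm can}^z_{xy}:A_{zx}\otimes_{B_x}A_{xy}\to A_{zy}\otimes H_{xy}$, $a\otimes_{B_x}a'\mapsto aa'_{[0]}\otimes a'_{[1]}$; $A$ is an $H$-Galois category extension of $B$ if they are all bijective. *)

theory Defs
  imports Main "HOL-Library.FuncSet" "HOL-Library.Function_Algebras"
begin

text \<open>An element of a tensor product M \<otimes>_R N is represented by a finite list of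
pairs [(m1,n1),...,(mr,nr)] standing for the sum m1\<otimes>n1 + ... + mr\<otimes>nr.
Two such lists represent the same element iff the difference of their images in the
free abelian group on M \<times> N (functions with integer values, here given by occurrence
counts) lies in the subgroup generated by the usual bilinearity and balancing
relations.\<close>

definition fdelta :: "'b \<Rightarrow> 'b \<Rightarrow> int" where
  "fdelta p = (\<lambda>q. if q = p then 1 else 0)"

definition fcount :: "'b list \<Rightarrow> 'b \<Rightarrow> int" where
  "fcount xs = (\<lambda>q. int (count_list xs q))"

inductive_set zspan :: "('b \<Rightarrow> int) set \<Rightarrow> ('b \<Rightarrow> int) set" for S where
  zspan_zero: "(\<lambda>_. 0) \<in> zspan S"
| zspan_add: "f \<in> S \<Longrightarrow> g \<in> zspan S \<Longrightarrow> (\<lambda>q. g q + f q) \<in> zspan S"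
| zspan_diff: "f \<in> S \<Longrightarrow> g \<in> zspan S \<Longrightarrow> (\<lambda>q. g q - f q) \<in> zspan S"

definition tensor_rels ::
  "'m::ab_group_add set \<Rightarrow> 'n::ab_group_add set \<Rightarrow> 'r set \<Rightarrow> ('m \<Rightarrow> 'r \<Rightarrow> 'm) \<Rightarrow> ('r \<Rightarrow> 'n \<Rightarrow> 'n)
     \<Rightarrow> ('m \<times> 'n \<Rightarrow> int) set" where
  "tensor_rels M N R ract lact =
     {(\<lambda>q. fdelta (m + m', n) q - fdelta (m, n) q - fdelta (m', n) q) | m m' n.
         m \<in> M \<and> m' \<in> M \<and> n \<in> N}
   \<union> {(\<lambda>q. fdelta (m, n + n') q - fdelta (m, n) q - fdelta (m, n') q) | m n n'.
         m \<in> M \<and> n \<in> N \<and> n' \<in> N}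
   \<union> {(\<lambda>q. fdelta (ract m r, n) q - fdelta (m, lact r n) q) | m r n.
         m \<in> M \<and> r \<in> R \<and> n \<in> N}"

definition tensor_eq ::
  "'m::ab_group_add set \<Rightarrow> 'n::ab_group_add set \<Rightarrow> 'r set \<Rightarrow> ('m \<Rightarrow> 'r \<Rightarrow> 'm) \<Rightarrow> ('r \<Rightarrow> 'n \<Rightarrow> 'n)
     \<Rightarrow> ('m \<times> 'n) list \<Rightarrow> ('m \<times> 'n) list \<Rightarrow> bool" where
  "tensor_eq M N R ract lact xs ys \<longleftrightarrow>
     set xs \<subseteq> M \<times> N \<and> set ys \<subseteq> M \<times> N \<and>
     (\<lambda>q. fcount xs q - fcount ys q) \<in> zspan (tensor_rels M N R ract lact)"

definition ktensor_eq ::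
  "'m::ab_group_add set \<Rightarrow> ('k \<Rightarrow> 'm \<Rightarrow> 'm) \<Rightarrow> 'n::ab_group_add set \<Rightarrow> ('k \<Rightarrow> 'n \<Rightarrow> 'n)
     \<Rightarrow> ('m \<times> 'n) list \<Rightarrow> ('m \<times> 'n) list \<Rightarrow> bool" where
  "ktensor_eq M sM N sN = tensor_eq M N UNIV (\<lambda>m c. sM c m) sN"

definition ktensor3_rels ::
  "'l::ab_group_add set \<Rightarrow> ('k \<Rightarrow> 'l \<Rightarrow> 'l) \<Rightarrow> 'm::ab_group_add set \<Rightarrow> ('k \<Rightarrow> 'm \<Rightarrow> 'm)
     \<Rightarrow> 'n::ab_group_add set \<Rightarrow> ('k \<Rightarrow> 'n \<Rightarrow> 'n) \<Rightarrow> ('l \<times> 'm \<times> 'n \<Rightarrow> int) set" where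
  "ktensor3_rels L sL M sM N sN =
     {(\<lambda>q. fdelta (l + l', m, n) q - fdelta (l, m, n) q - fdelta (l', m, n) q) | l l' m n.
         l \<in> L \<and> l' \<in> L \<and> m \<in> M \<and> n \<in> N}
   \<union> {(\<lambda>q. fdelta (l, m + m', n) q - fdelta (l, m, n) q - fdelta (l, m', n) q) | l m m' n.
         l \<in> L \<and> m \<in> M \<and> m' \<in> M \<and> n \<in> N}
   \<union> {(\<lambda>q. fdelta (l, m, n + n') q - fdelta (l, m, n) q - fdelta (l, m, n') q) | l m n n'.
         l \<in> L \<and> m \<in> M \<and> n \<in> N \<and> n' \<in> N}
   \<union> {(\<lambda>q. fdelta (sL c l, m, n) q - fdelta (l, sM c m, n) q) | c l m n.
         l \<in> L \<and> m \<in> M \<and> n \<in> N}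
   \<union> {(\<lambda>q. fdelta (l, sM c m, n) q - fdelta (l, m, sN c n) q) | c l m n.
         l \<in> L \<and> m \<in> M \<and> n \<in> N}"

definition ktensor3_eq ::
  "'l::ab_group_add set \<Rightarrow> ('k \<Rightarrow> 'l \<Rightarrow> 'l) \<Rightarrow> 'm::ab_group_add set \<Rightarrow> ('k \<Rightarrow> 'm \<Rightarrow> 'm)
     \<Rightarrow> 'n::ab_group_add set \<Rightarrow> ('k \<Rightarrow> 'n \<Rightarrow> 'n)
     \<Rightarrow> ('l \<times> 'm \<times> 'n) list \<Rightarrow> ('l \<times> 'm \<times> 'n) list \<Rightarrow> bool" where
  "ktensor3_eq L sL M sM N sN xs ys \<longleftrightarrow>
     set xs \<subseteq> L \<times> M \<times> N \<and> set ys \<subseteq> L \<times> M \<times> N \<and>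
     (\<lambda>q. fcount xs q - fcount ys q) \<in> zspan (ktensor3_rels L sL M sM N sN)"

text \<open>A k-module: a subgroup M of an ambient abelian group with a k-action.\<close>
definition kmodule :: "'m::ab_group_add set \<Rightarrow> ('k::comm_ring_1 \<Rightarrow> 'm \<Rightarrow> 'm) \<Rightarrow> bool" where
  "kmodule M s \<longleftrightarrow>
     0 \<in> M \<and> (\<forall>a\<in>M. \<forall>b\<in>M. a + b \<in> M) \<and> (\<forall>a\<in>M. - a \<in> M) \<and>
     (\<forall>c. \<forall>a\<in>M. s c a \<in> M) \<and>
     (\<forall>c. \<forall>a\<in>M. \<forall>b\<in>M. s c (a + b) = s c a + s c b) \<and>
     (\<forall>c d. \<forall>a\<in>M. s (c + d) a = s c a + s d a) \<and>
     (\<forall>c d. \<forall>a\<in>M. s (c * d) a = s c (s d a)) \<and>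
     (\<forall>a\<in>M. s 1 a = a)"

definition lin_map ::
  "'r set \<Rightarrow> 'm::ab_group_add set \<Rightarrow> ('r \<Rightarrow> 'm \<Rightarrow> 'm) \<Rightarrow> 'n::ab_group_add set \<Rightarrow> ('r \<Rightarrow> 'n \<Rightarrow> 'n)
     \<Rightarrow> ('m \<Rightarrow> 'n) \<Rightarrow> bool" where
  "lin_map R M actM N actN f \<longleftrightarrow>
     (\<forall>m\<in>M. f m \<in> N) \<and> (\<forall>m\<in>M. \<forall>m'\<in>M. f (m + m') = f m + f m') \<and>
     (\<forall>r\<in>R. \<forall>m\<in>M. f (actM r m) = actN r (f m))"

text \<open>The set Hom_R(M,N) (maps are taken extensional on M, so that function
equality is equality of maps M \<rightarrow> N).\<close>
definition Hom ::
  "'r set \<Rightarrow> 'm::ab_group_add set \<Rightarrow> ('r \<Rightarrow> 'm \<Rightarrow> 'm) \<Rightarrow> 'n::ab_group_add set \<Rightarrow> ('r \<Rightarrow> 'n \<Rightarrow> 'n)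
     \<Rightarrow> ('m \<Rightarrow> 'n) set" where
  "Hom R M actM N actN = {f. lin_map R M actM N actN f \<and> f \<in> extensional M}"

definition freemod :: "'r::zero set \<Rightarrow> nat \<Rightarrow> (nat \<Rightarrow> 'r) set" where
  "freemod R n = {v. (\<forall>i. v i \<in> R) \<and> (\<forall>i\<ge>n. v i = 0)}"

definition fg_projective ::
  "'r::ab_group_add set \<Rightarrow> ('r \<Rightarrow> 'r \<Rightarrow> 'r) \<Rightarrow> 'm::ab_group_add set \<Rightarrow> ('r \<Rightarrow> 'm \<Rightarrow> 'm) \<Rightarrow> bool" where
  "fg_projective R mult M act \<longleftrightarrow>
     (\<exists>n \<iota> \<pi>. lin_map R M act (freemod R n) (\<lambda>r v i. mult r (v i)) \<iota> \<and>
              lin_map R (freemod R n) (\<lambda>r v i. mult r (v i)) M act \<pi> \<and>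
              (\<forall>m\<in>M. \<pi> (\<iota> m) = m))"

text \<open>A k-linear category with object type 'x: hom-modules C x y (all inside one
ambient abelian group 'a), composition m x y z : C x y \<times> C y z \<rightarrow> C x z, units e x.\<close>
definition klin_cat ::
  "('x \<Rightarrow> 'x \<Rightarrow> 'a::ab_group_add set) \<Rightarrow> ('k::comm_ring_1 \<Rightarrow> 'a \<Rightarrow> 'a)
     \<Rightarrow> ('x \<Rightarrow> 'x \<Rightarrow> 'x \<Rightarrow> 'a \<Rightarrow> 'a \<Rightarrow> 'a) \<Rightarrow> ('x \<Rightarrow> 'a) \<Rightarrow> bool" where
  "klin_cat C s m e \<longleftrightarrow>
     (\<forall>x y. kmodule (C x y) s) \<and>
     (\<forall>x y z. \<forall>a\<in>C x y. \<forall>b\<in>C y z. m x y z a b \<in> C x z) \<and>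
     (\<forall>x y z. \<forall>a\<in>C x y. \<forall>a'\<in>C x y. \<forall>b\<in>C y z. m x y z (a + a') b = m x y z a b + m x y z a' b) \<and>
     (\<forall>x y z. \<forall>a\<in>C x y. \<forall>b\<in>C y z. \<forall>b'\<in>C y z. m x y z a (b + b') = m x y z a b + m x y z a b') \<and>
     (\<forall>x y z c. \<forall>a\<in>C x y. \<forall>b\<in>C y z. m x y z (s c a) b = s c (m x y z a b)) \<and>
     (\<forall>x y z c. \<forall>a\<in>C x y. \<forall>b\<in>C y z. m x y z a (s c b) = s c (m x y z a b)) \<and>
     (\<forall>w x y z. \<forall>a\<in>C w x. \<forall>b\<in>C x y. \<forall>c\<in>C y z.
        m w y z (m w x y a b) c = m w x z a (m x y z b c)) \<and>
     (\<forall>x. e x \<in> C x x) \<and>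
     (\<forall>x y. \<forall>a\<in>C x y. m x x y (e x) a = a \<and> m x y y a (e y) = a)"

text \<open>A k-coalgebra (C, Delta, eps); Delta(h) is given by a representing formal sum.\<close>
definition kcoalgebra ::
  "'h::ab_group_add set \<Rightarrow> ('k::comm_ring_1 \<Rightarrow> 'h \<Rightarrow> 'h) \<Rightarrow> ('h \<Rightarrow> ('h \<times> 'h) list) \<Rightarrow> ('h \<Rightarrow> 'k)
     \<Rightarrow> bool" where
  "kcoalgebra C s Delta eps \<longleftrightarrow>
     kmodule C s \<and>
     (\<forall>h\<in>C. set (Delta h) \<subseteq> C \<times> C) \<and>
     (\<forall>h\<in>C. \<forall>h'\<in>C. ktensor_eq C s C s (Delta (h + h')) (Delta h @ Delta h')) \<and>
     (\<forall>c. \<forall>h\<in>C. ktensor_eq C s C s (Delta (s c h)) (map (\<lambda>(h1, h2). (s c h1, h2)) (Delta h))) \<and>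
     (\<forall>h\<in>C. \<forall>h'\<in>C. eps (h + h') = eps h + eps h') \<and>
     (\<forall>c. \<forall>h\<in>C. eps (s c h) = c * eps h) \<and>
     (\<forall>h\<in>C. ktensor3_eq C s C s C s
        (concat (map (\<lambda>(h1, h2). map (\<lambda>(u, v). (u, v, h2)) (Delta h1)) (Delta h)))
        (concat (map (\<lambda>(h1, h2). map (\<lambda>(u, v). (h1, u, v)) (Delta h2)) (Delta h)))) \<and>
     (\<forall>h\<in>C. sum_list (map (\<lambda>(h1, h2). s (eps h1) h2) (Delta h)) = h) \<and>
     (\<forall>h\<in>C. sum_list (map (\<lambda>(h1, h2). s (eps h2) h1) (Delta h)) = h)"

definition semi_hopf_cat ::
  "('x \<Rightarrow> 'x \<Rightarrow> 'h::ab_group_add set) \<Rightarrow> ('k::comm_ring_1 \<Rightarrow> 'h \<Rightarrow> 'h)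
     \<Rightarrow> ('x \<Rightarrow> 'x \<Rightarrow> 'x \<Rightarrow> 'h \<Rightarrow> 'h \<Rightarrow> 'h) \<Rightarrow> ('x \<Rightarrow> 'h)
     \<Rightarrow> ('x \<Rightarrow> 'x \<Rightarrow> 'h \<Rightarrow> ('h \<times> 'h) list) \<Rightarrow> ('x \<Rightarrow> 'x \<Rightarrow> 'h \<Rightarrow> 'k) \<Rightarrow> bool" where
  "semi_hopf_cat Hc sH mH eH Delta eps \<longleftrightarrow>
     klin_cat Hc sH mH eH \<and>
     (\<forall>x y. kcoalgebra (Hc x y) sH (Delta x y) (eps x y)) \<and>
     (\<forall>x y z. \<forall>h\<in>Hc x y. \<forall>h'\<in>Hc y z.
        ktensor_eq (Hc x z) sH (Hc x z) sH (Delta x z (mH x y z h h'))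
          (concat (map (\<lambda>(h1, h2). map (\<lambda>(h1', h2'). (mH x y z h1 h1', mH x y z h2 h2'))
                          (Delta y z h')) (Delta x y h)))) \<and>
     (\<forall>x. ktensor_eq (Hc x x) sH (Hc x x) sH (Delta x x (eH x)) [(eH x, eH x)]) \<and>
     (\<forall>x y z. \<forall>h\<in>Hc x y. \<forall>h'\<in>Hc y z. eps x z (mH x y z h h') = eps x y h * eps y z h') \<and>
     (\<forall>x. eps x x (eH x) = 1)"

text \<open>A right H-comodule category A (same objects 'x), rho x y a representing a_[0] \<otimes> a_[1].\<close>
definition comodule_cat ::
  "('x \<Rightarrow> 'x \<Rightarrow> 'h::ab_group_add set) \<Rightarrow> ('k::comm_ring_1 \<Rightarrow> 'h \<Rightarrow> 'h)
     \<Rightarrow> ('x \<Rightarrow> 'x \<Rightarrow> 'x \<Rightarrow> 'h \<Rightarrow> 'h \<Rightarrow> 'h) \<Rightarrow> ('x \<Rightarrow> 'h)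
     \<Rightarrow> ('x \<Rightarrow> 'x \<Rightarrow> 'h \<Rightarrow> ('h \<times> 'h) list) \<Rightarrow> ('x \<Rightarrow> 'x \<Rightarrow> 'h \<Rightarrow> 'k)
     \<Rightarrow> ('x \<Rightarrow> 'x \<Rightarrow> 'a::ab_group_add set) \<Rightarrow> ('k \<Rightarrow> 'a \<Rightarrow> 'a)
     \<Rightarrow> ('x \<Rightarrow> 'x \<Rightarrow> 'x \<Rightarrow> 'a \<Rightarrow> 'a \<Rightarrow> 'a) \<Rightarrow> ('x \<Rightarrow> 'a)
     \<Rightarrow> ('x \<Rightarrow> 'x \<Rightarrow> 'a \<Rightarrow> ('a \<times> 'h) list) \<Rightarrow> bool" where
  "comodule_cat Hc sH mH eH Delta eps Ac sA mA eA rho \<longleftrightarrow>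
     klin_cat Ac sA mA eA \<and>
     (\<forall>x y. \<forall>a\<in>Ac x y. set (rho x y a) \<subseteq> Ac x y \<times> Hc x y) \<and>
     (\<forall>x y. \<forall>a\<in>Ac x y. \<forall>a'\<in>Ac x y.
        ktensor_eq (Ac x y) sA (Hc x y) sH (rho x y (a + a')) (rho x y a @ rho x y a')) \<and>
     (\<forall>x y c. \<forall>a\<in>Ac x y.
        ktensor_eq (Ac x y) sA (Hc x y) sH (rho x y (sA c a))
          (map (\<lambda>(a0, h). (sA c a0, h)) (rho x y a))) \<and>
     (\<forall>x y. \<forall>a\<in>Ac x y. ktensor3_eq (Ac x y) sA (Hc x y) sH (Hc x y) sH
        (concat (map (\<lambda>(a0, h). map (\<lambda>(u, v). (u, v, h)) (rho x y a0)) (rho x y a)))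
        (concat (map (\<lambda>(a0, h). map (\<lambda>(u, v). (a0, u, v)) (Delta x y h)) (rho x y a)))) \<and>
     (\<forall>x y. \<forall>a\<in>Ac x y. sum_list (map (\<lambda>(a0, h). sA (eps x y h) a0) (rho x y a)) = a) \<and>
     (\<forall>x y z. \<forall>a\<in>Ac x y. \<forall>b\<in>Ac y z.
        ktensor_eq (Ac x z) sA (Hc x z) sH (rho x z (mA x y z a b))
          (concat (map (\<lambda>(a0, a1). map (\<lambda>(b0, b1). (mA x y z a0 b0, mH x y z a1 b1))
                          (rho y z b)) (rho x y a)))) \<and>
     (\<forall>x. ktensor_eq (Ac x x) sA (Hc x x) sH (rho x x (eA x)) [(eA x, eH x)])"

definition coinv ::
  "('x \<Rightarrow> 'x \<Rightarrow> 'h::ab_group_add set) \<Rightarrow> ('k \<Rightarrow> 'h \<Rightarrow> 'h) \<Rightarrow> ('x \<Rightarrow> 'h)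
     \<Rightarrow> ('x \<Rightarrow> 'x \<Rightarrow> 'a::ab_group_add set) \<Rightarrow> ('k \<Rightarrow> 'a \<Rightarrow> 'a)
     \<Rightarrow> ('x \<Rightarrow> 'x \<Rightarrow> 'a \<Rightarrow> ('a \<times> 'h) list) \<Rightarrow> 'x \<Rightarrow> 'a set" where
  "coinv Hc sH eH Ac sA rho x =
     {a \<in> Ac x x. ktensor_eq (Ac x x) sA (Hc x x) sH (rho x x a) [(a, eH x)]}"

definition can_map ::
  "('x \<Rightarrow> 'x \<Rightarrow> 'x \<Rightarrow> 'a \<Rightarrow> 'a \<Rightarrow> 'a) \<Rightarrow> ('x \<Rightarrow> 'x \<Rightarrow> 'a \<Rightarrow> ('a \<times> 'h) list)
     \<Rightarrow> 'x \<Rightarrow> 'x \<Rightarrow> 'x \<Rightarrow> ('a \<times> 'a) list \<Rightarrow> ('a \<times> 'h) list" where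
  "can_map mA rho z x y xs =
     concat (map (\<lambda>(a, a'). map (\<lambda>(a0, h). (mA z x y a a0, h)) (rho x y a')) xs)"

text \<open>A is an H-Galois category extension of B: every can^z_{xy} from
A_{zx} \<otimes>_{B_x} A_{xy} to A_{zy} \<otimes> H_{xy} is a (well-defined) bijection.\<close>
definition galois_cat_ext ::
  "('x \<Rightarrow> 'x \<Rightarrow> 'h::ab_group_add set) \<Rightarrow> ('k \<Rightarrow> 'h \<Rightarrow> 'h) \<Rightarrow> ('x \<Rightarrow> 'h)
     \<Rightarrow> ('x \<Rightarrow> 'x \<Rightarrow> 'a::ab_group_add set) \<Rightarrow> ('k \<Rightarrow> 'a \<Rightarrow> 'a)
     \<Rightarrow> ('x \<Rightarrow> 'x \<Rightarrow> 'x \<Rightarrow> 'a \<Rightarrow> 'a \<Rightarrow> 'a) \<Rightarrow> ('x \<Rightarrow> 'x \<Rightarrow> 'a \<Rightarrow> ('a \<times> 'h) list) \<Rightarrow> bool" where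
  "galois_cat_ext Hc sH eH Ac sA mA rho \<longleftrightarrow>
     (\<forall>x y z.
        (\<forall>xs ys. set xs \<subseteq> Ac z x \<times> Ac x y \<longrightarrow> set ys \<subseteq> Ac z x \<times> Ac x y \<longrightarrow>
           (tensor_eq (Ac z x) (Ac x y) (coinv Hc sH eH Ac sA rho x)
               (\<lambda>a b. mA z x x a b) (\<lambda>b a'. mA x x y b a') xs ys
            \<longleftrightarrow> ktensor_eq (Ac z y) sA (Hc x y) sH (can_map mA rho z x y xs) (can_map mA rho z x y ys))) \<and>
        (\<forall>zs. set zs \<subseteq> Ac z y \<times> Hc x y \<longrightarrow>
           (\<exists>xs. set xs \<subseteq> Ac z x \<times> Ac x y \<and>
                 ktensor_eq (Ac z y) sA (Hc x y) sH (can_map mA rho z x y xs) zs)))"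

text \<open>The maps delta: g \<mapsto> (a \<mapsto> a_[0] g(a_[1])), made extensional on A_{xy};
target objects u v: delta^x_{uv} applies to g : H_{xy} \<rightarrow> A_{yv}.\<close>
definition delta_map ::
  "('x \<Rightarrow> 'x \<Rightarrow> 'a set) \<Rightarrow> ('x \<Rightarrow> 'x \<Rightarrow> 'x \<Rightarrow> 'a \<Rightarrow> 'a \<Rightarrow> 'a) \<Rightarrow> ('x \<Rightarrow> 'x \<Rightarrow> 'a \<Rightarrow> ('a \<times> 'h) list)
     \<Rightarrow> 'x \<Rightarrow> 'x \<Rightarrow> 'x \<Rightarrow> ('h \<Rightarrow> 'a) \<Rightarrow> 'a \<Rightarrow> 'a::monoid_add" where
  "delta_map Ac mA rho x y v g =
     restrict (\<lambda>a. sum_list (map (\<lambda>(a0, h). mA x y v a0 (g h)) (rho x y a))) (Ac x y)"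

end

theory Submission
  imports Defs "HOL-Library.Multiset"
begin


lemma fcount_append: "fcount (xs @ ys) = fcount xs + fcount ys"
  by (auto simp: fcount_def fun_eq_iff)

lemma fcount_Nil: "fcount [] = 0"
  by (auto simp: fcount_def fun_eq_iff)

lemma fcount_single: "fcount [p] = fdelta p"
  by (auto simp: fcount_def fdelta_def fun_eq_iff)

lemma fcount_concat: "fcount (concat (map f xs)) = sum_list (map (\<lambda>x. fcount (f x)) xs)"
  by (induction xs) (auto simp: fcount_append fcount_Nil)

lemma zspan_S: "f \<in> S \<Longrightarrow> f \<in> zspan S"
  using zspan.zspan_add[OF _ zspan.zspan_zero, of f S] by simp

lemma zspan_plus: "h \<in> zspan S \<Longrightarrow> g \<in> zspan S \<Longrightarrow> (\<lambda>q. g q + h q) \<in> zspan S"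
proof (induction h rule: zspan.induct)
  case zspan_zero then show ?case by simp
next
  case (zspan_add f h)
  have "(\<lambda>q. g q + (h q + f q)) = (\<lambda>q. (g q + h q) + f q)" by (simp add: algebra_simps)
  then show ?case using zspan.zspan_add[OF zspan_add(1) zspan_add(3)[OF zspan_add(4)]] by simp
next
  case (zspan_diff f h)
  have "(\<lambda>q. g q + (h q - f q)) = (\<lambda>q. (g q + h q) - f q)" by (simp add: algebra_simps)
  then show ?case using zspan.zspan_diff[OF zspan_diff(1) zspan_diff(3)[OF zspan_diff(4)]] by simp
qed

lemma zspan_neg: "h \<in> zspan S \<Longrightarrow> (\<lambda>q. - h q) \<in> zspan S"
proof (induction h rule: zspan.induct)
  case zspan_zero then show ?case by (simp add: zspan.zspan_zero)
next
  case (zspan_add f h)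
  have "(\<lambda>q. - (h q + f q)) = (\<lambda>q. (- h q) - f q)" by (simp add: fun_eq_iff)
  then show ?case using zspan.zspan_diff[OF zspan_add(1) zspan_add(3)] by simp
next
  case (zspan_diff f h)
  have "(\<lambda>q. - (h q - f q)) = (\<lambda>q. (- h q) + f q)" by (simp add: fun_eq_iff)
  then show ?case using zspan.zspan_add[OF zspan_diff(1) zspan_diff(3)] by simp
qed

lemma zspan_minus: "g \<in> zspan S \<Longrightarrow> h \<in> zspan S \<Longrightarrow> (\<lambda>q. g q - h q) \<in> zspan S"
  using zspan_plus[OF zspan_neg[of h S] , of g] by simp

lemma zspan_fun: "zspan S = {f. f \<in> zspan S}" by simp

lemma zspan_plus': "h \<in> zspan S \<Longrightarrow> g \<in> zspan S \<Longrightarrow> g + h \<in> zspan S"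
  using zspan_plus[of h S g] by (simp add: plus_fun_def)

lemma zspan_minus': "g \<in> zspan S \<Longrightarrow> h \<in> zspan S \<Longrightarrow> g - h \<in> zspan S"
  using zspan_minus[of g S h] by (simp add: fun_diff_def)

lemma zspan_zero': "0 \<in> zspan S"
  using zspan.zspan_zero[of S] by (simp add: zero_fun_def)

lemma sum_list_mset_eq:
  fixes F :: "'a \<Rightarrow> 'g::comm_monoid_add"
  assumes "fcount L = fcount L'"
  shows "sum_list (map F L) = sum_list (map F L')"
proof -
  have "count (mset L) q = count (mset L') q" for q
    using fun_cong[OF assms, of q] by (simp add: count_mset fcount_def)
  then have "mset L = mset L'"
    by (rule multiset_eqI)
  then have "mset (map F L) = mset (map F L')" by simp
  then have "sum_mset (mset (map F L)) = sum_mset (mset (map F L'))" by simp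
  then show ?thesis
    by (simp only: sum_mset_sum_list)
qed

lemma lift_core:
  assumes d: "d \<in> zspan S"
    and gens: "\<forall>f\<in>S. \<exists>R1 R2. f = (\<lambda>q. fcount R1 q - fcount R2 q) \<and>
                  sum_list (map F R1) - sum_list (map F R2) \<in> Z"
    and Z0: "0 \<in> Z" and Zp: "\<And>a b. a \<in> Z \<Longrightarrow> b \<in> Z \<Longrightarrow> a + b \<in> Z"
    and Zm: "\<And>a b. a \<in> Z \<Longrightarrow> b \<in> Z \<Longrightarrow> a - b \<in> Z"
  shows "\<forall>L L'. d = (\<lambda>q. fcount L q - fcount L' q) \<longrightarrow>
           sum_list (map F L) - sum_list (map (F :: _ \<Rightarrow> 'g::ab_group_add) L') \<in> Z"
  using d
proof (induction d rule: zspan.induct)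
  case zspan_zero
  show ?case
  proof (intro allI impI)
    fix L L' :: "'a list"
    assume "(\<lambda>_. 0) = (\<lambda>q. fcount L q - fcount L' q)"
    then have "fcount L = fcount L'" by (auto simp: fun_eq_iff)
    then show "sum_list (map F L) - sum_list (map F L') \<in> Z"
      using sum_list_mset_eq[of L L' F] Z0 by simp
  qed
next
  case (zspan_add f g)
  obtain R1 R2 where R: "f = (\<lambda>q. fcount R1 q - fcount R2 q)"
    "sum_list (map F R1) - sum_list (map F R2) \<in> Z" using gens zspan_add(1) by blast
  show ?case
  proof (intro allI impI)
    fix L L'
    assume eq: "(\<lambda>q. g q + f q) = (\<lambda>q. fcount L q - fcount L' q)"
    have "g = (\<lambda>q. fcount (L @ R2) q - fcount (L' @ R1) q)"
    proof
      fix q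
      have "g q + f q = fcount L q - fcount L' q" using eq by metis
      then show "g q = fcount (L @ R2) q - fcount (L' @ R1) q"
        using R(1) by (simp add: fcount_append algebra_simps)
    qed
    then have "sum_list (map F (L @ R2)) - sum_list (map F (L' @ R1)) \<in> Z"
      using zspan_add(3) by blast
    then have "(sum_list (map F (L @ R2)) - sum_list (map F (L' @ R1))) +
        (sum_list (map F R1) - sum_list (map F R2)) \<in> Z" using Zp R(2) by blast
    then show "sum_list (map F L) - sum_list (map F L') \<in> Z"
      by (simp add: algebra_simps)
  qed
next
  case (zspan_diff f g)
  obtain R1 R2 where R: "f = (\<lambda>q. fcount R1 q - fcount R2 q)"
    "sum_list (map F R1) - sum_list (map F R2) \<in> Z" using gens zspan_diff(1) by blast
  show ?case
  proof (intro allI impI)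
    fix L L'
    assume eq: "(\<lambda>q. g q - f q) = (\<lambda>q. fcount L q - fcount L' q)"
    have "g = (\<lambda>q. fcount (L @ R1) q - fcount (L' @ R2) q)"
    proof
      fix q
      have "g q - f q = fcount L q - fcount L' q" using eq by metis
      then show "g q = fcount (L @ R1) q - fcount (L' @ R2) q"
        using R(1) by (simp add: fcount_append algebra_simps)
    qed
    then have "sum_list (map F (L @ R1)) - sum_list (map F (L' @ R2)) \<in> Z"
      using zspan_diff(3) by blast
    then have "(sum_list (map F (L @ R1)) - sum_list (map F (L' @ R2))) -
        (sum_list (map F R1) - sum_list (map F R2)) \<in> Z" using Zm R(2) by blast
    then show "sum_list (map F L) - sum_list (map F L') \<in> Z"
      by (simp add: algebra_simps)
  qed
qed


lemma fcount_two: "fcount [a, b] = fdelta a + fdelta b"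
  by (auto simp: fcount_def fdelta_def fun_eq_iff)

lemma tensor_rels_gens:
  assumes "\<And>m m' n. m \<in> M \<Longrightarrow> m' \<in> M \<Longrightarrow> n \<in> N \<Longrightarrow> Q [(m + m', n)] [(m, n), (m', n)]"
    and "\<And>m n n'. m \<in> M \<Longrightarrow> n \<in> N \<Longrightarrow> n' \<in> N \<Longrightarrow> Q [(m, n + n')] [(m, n), (m, n')]"
    and "\<And>m r n. m \<in> M \<Longrightarrow> r \<in> R \<Longrightarrow> n \<in> N \<Longrightarrow> Q [(ract m r, n)] [(m, lact r n)]"
  shows "\<forall>f\<in>tensor_rels M N R ract lact. \<exists>R1 R2. f = (\<lambda>q. fcount R1 q - fcount R2 q) \<and> Q R1 R2"
proof
  fix f assume "f \<in> tensor_rels M N R ract lact"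
  then consider (a) m m' n where "m \<in> M" "m' \<in> M" "n \<in> N"
      "f = (\<lambda>q. fdelta (m + m', n) q - fdelta (m, n) q - fdelta (m', n) q)"
    | (b) m n n' where "m \<in> M" "n \<in> N" "n' \<in> N"
      "f = (\<lambda>q. fdelta (m, n + n') q - fdelta (m, n) q - fdelta (m, n') q)"
    | (c) m r n where "m \<in> M" "r \<in> R" "n \<in> N"
      "f = (\<lambda>q. fdelta (ract m r, n) q - fdelta (m, lact r n) q)"
    unfolding tensor_rels_def by blast
  then show "\<exists>R1 R2. f = (\<lambda>q. fcount R1 q - fcount R2 q) \<and> Q R1 R2"
  proof cases
    case a
    then show ?thesis using assms(1)[OF a(1-3)]
      by (intro exI[of _ "[(m + m', n)]"] exI[of _ "[(m, n), (m', n)]"])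
         (simp add: fcount_single fcount_two fun_eq_iff)
  next
    case b
    then show ?thesis using assms(2)[OF b(1-3)]
      by (intro exI[of _ "[(m, n + n')]"] exI[of _ "[(m, n), (m, n')]"])
         (simp add: fcount_single fcount_two fun_eq_iff)
  next
    case c
    then show ?thesis using assms(3)[OF c(1-3)]
      by (intro exI[of _ "[(ract m r, n)]"] exI[of _ "[(m, lact r n)]"])
         (simp add: fcount_single fun_eq_iff)
  qed
qed

lemma lift_scalar:
  fixes F :: "'m::ab_group_add \<times> 'n::ab_group_add \<Rightarrow> 'g::ab_group_add"
  assumes T: "tensor_eq M N R ract lact L L'"
    and A1: "\<And>m m' n. m \<in> M \<Longrightarrow> m' \<in> M \<Longrightarrow> n \<in> N \<Longrightarrow> F (m + m', n) = F (m, n) + F (m', n)"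
    and A2: "\<And>m n n'. m \<in> M \<Longrightarrow> n \<in> N \<Longrightarrow> n' \<in> N \<Longrightarrow> F (m, n + n') = F (m, n) + F (m, n')"
    and A3: "\<And>m r n. m \<in> M \<Longrightarrow> r \<in> R \<Longrightarrow> n \<in> N \<Longrightarrow> F (ract m r, n) = F (m, lact r n)"
  shows "sum_list (map F L) = sum_list (map F L')"
proof -
  have g: "\<forall>f\<in>tensor_rels M N R ract lact. \<exists>R1 R2. f = (\<lambda>q. fcount R1 q - fcount R2 q) \<and>
      sum_list (map F R1) - sum_list (map F R2) \<in> {0}"
    by (rule tensor_rels_gens) (simp_all add: A1 A2 A3)
  have "sum_list (map F L) - sum_list (map F L') \<in> {0}"
    using lift_core[OF _ g, of "\<lambda>q. fcount L q - fcount L' q"] T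
    unfolding tensor_eq_def by auto
  then show ?thesis by simp
qed

lemma te_refl: "set xs \<subseteq> M \<times> N \<Longrightarrow> tensor_eq M N R ract lact xs xs"
  unfolding tensor_eq_def using zspan.zspan_zero by simp

lemma te_sym: "tensor_eq M N R ract lact xs ys \<Longrightarrow> tensor_eq M N R ract lact ys xs"
  unfolding tensor_eq_def using zspan_neg by fastforce

lemma te_trans: "tensor_eq M N R ract lact xs ys \<Longrightarrow> tensor_eq M N R ract lact ys zs
   \<Longrightarrow> tensor_eq M N R ract lact xs zs"
  unfolding tensor_eq_def using zspan_plus by fastforce

lemma te_append: "tensor_eq M N R ract lact xs ys \<Longrightarrow> tensor_eq M N R ract lact xs' ys'
   \<Longrightarrow> tensor_eq M N R ract lact (xs @ xs') (ys @ ys')"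
  unfolding tensor_eq_def using zspan_plus[of "\<lambda>q. fcount xs' q - fcount ys' q" _ "\<lambda>q. fcount xs q - fcount ys q"]
  by (simp add: fcount_append algebra_simps)

lemma te_perm: "mset xs = mset ys \<Longrightarrow> set xs \<subseteq> M \<times> N \<Longrightarrow> tensor_eq M N R ract lact xs ys"
proof -
  assume m: "mset xs = mset ys" and s: "set xs \<subseteq> M \<times> N"
  have "fcount xs = fcount ys"
    unfolding fcount_def using m by (metis count_mset)
  moreover have "set ys = set xs" using m by (metis set_mset_mset)
  ultimately show ?thesis unfolding tensor_eq_def using s zspan.zspan_zero by simp
qed

lemma te_concat:
  assumes "\<And>x. x \<in> set I \<Longrightarrow> tensor_eq M N R ract lact (f x) (g x)"
  shows "tensor_eq M N R ract lact (concat (map f I)) (concat (map g I))"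
  using assms
proof (induction I)
  case Nil then show ?case by (simp add: te_refl)
next
  case (Cons a I) then show ?case by (simp add: te_append)
qed

lemma te_gen1: "m \<in> M \<Longrightarrow> m' \<in> M \<Longrightarrow> n \<in> N \<Longrightarrow> m + m' \<in> M \<Longrightarrow>
   tensor_eq M N R ract lact [(m + m', n)] [(m, n), (m', n)]"
  unfolding tensor_eq_def
  apply (simp add: fcount_single fcount_two)
  apply (rule zspan_S) unfolding tensor_rels_def by (auto simp: algebra_simps)

lemma te_gen2: "m \<in> M \<Longrightarrow> n \<in> N \<Longrightarrow> n' \<in> N \<Longrightarrow> n + n' \<in> N \<Longrightarrow>
   tensor_eq M N R ract lact [(m, n + n')] [(m, n), (m, n')]"
  unfolding tensor_eq_def
  apply (simp add: fcount_single fcount_two)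
  apply (rule zspan_S) unfolding tensor_rels_def by (auto simp: algebra_simps)

lemma te_gen3: "m \<in> M \<Longrightarrow> r \<in> R \<Longrightarrow> n \<in> N \<Longrightarrow> ract m r \<in> M \<Longrightarrow> lact r n \<in> N \<Longrightarrow>
   tensor_eq M N R ract lact [(ract m r, n)] [(m, lact r n)]"
  unfolding tensor_eq_def
  apply (simp add: fcount_single)
  apply (rule zspan_S) unfolding tensor_rels_def by auto


lemma te_zero_l: "0 \<in> M \<Longrightarrow> n \<in> N \<Longrightarrow> tensor_eq M N R ract lact [(0, n)] []"
proof -
  assume a: "0 \<in> M" "n \<in> N"
  have "tensor_eq M N R ract lact [(0 + 0, n)] [(0, n), (0, n)]"
    using a by (intro te_gen1) auto
  then have z: "(\<lambda>q. fcount [(0, n)] q - fcount [(0, n), (0, n)] q) \<in> zspan (tensor_rels M N R ract lact)"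
    unfolding tensor_eq_def by simp
  have e: "(\<lambda>q. - (fcount [(0, n)] q - fcount [(0, n), (0, n)] q)) = (\<lambda>q. fcount [(0, n)] q - fcount [] q)"
    by (simp add: fcount_def fun_eq_iff)
  have "(\<lambda>q. fcount [(0, n)] q - fcount [] q) \<in> zspan (tensor_rels M N R ract lact)"
    using zspan_neg[OF z] unfolding e .
  then show ?thesis using a unfolding tensor_eq_def by simp
qed

lemma te_zero_r: "0 \<in> N \<Longrightarrow> m \<in> M \<Longrightarrow> tensor_eq M N R ract lact [(m, 0)] []"
proof -
  assume a: "0 \<in> N" "m \<in> M"
  have "tensor_eq M N R ract lact [(m, 0 + 0)] [(m, 0), (m, 0)]"
    using a by (intro te_gen2) auto
  then have z: "(\<lambda>q. fcount [(m, 0)] q - fcount [(m, 0), (m, 0)] q) \<in> zspan (tensor_rels M N R ract lact)"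
    unfolding tensor_eq_def by simp
  have e: "(\<lambda>q. - (fcount [(m, 0)] q - fcount [(m, 0), (m, 0)] q)) = (\<lambda>q. fcount [(m, 0)] q - fcount [] q)"
    by (simp add: fcount_def fun_eq_iff)
  have "(\<lambda>q. fcount [(m, 0)] q - fcount [] q) \<in> zspan (tensor_rels M N R ract lact)"
    using zspan_neg[OF z] unfolding e .
  then show ?thesis using a unfolding tensor_eq_def by simp
qed

lemma sum_list_closed:
  assumes "0 \<in> M" "\<forall>a\<in>M. \<forall>b\<in>M. a + b \<in> M" "set ms \<subseteq> M"
  shows "sum_list ms \<in> M"
  using assms(3) by (induction ms) (auto simp: assms(1,2))

lemma te_sum_l:
  assumes M0: "0 \<in> M" and Mp: "\<forall>a\<in>M. \<forall>b\<in>M. a + b \<in> M" and n: "n \<in> N"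
  shows "set ms \<subseteq> M \<Longrightarrow> tensor_eq M N R ract lact [(sum_list ms, n)] (map (\<lambda>m. (m, n)) ms)"
proof (induction ms)
  case Nil then show ?case using te_zero_l[OF M0 n] by simp
next
  case (Cons m ms)
  have sm: "sum_list ms \<in> M" using sum_list_closed[OF M0 Mp] Cons.prems by auto
  have "tensor_eq M N R ract lact [(m + sum_list ms, n)] [(m, n), (sum_list ms, n)]"
    using Cons.prems sm n Mp by (intro te_gen1) auto
  moreover have "tensor_eq M N R ract lact ([(m, n)] @ [(sum_list ms, n)]) ([(m, n)] @ map (\<lambda>m. (m, n)) ms)"
    using Cons n by (intro te_append te_refl) auto
  ultimately show ?case by (auto intro: te_trans)
qed

lemma te_sum_r:
  assumes N0: "0 \<in> N" and Np: "\<forall>a\<in>N. \<forall>b\<in>N. a + b \<in> N" and m: "m \<in> M"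
  shows "set ns \<subseteq> N \<Longrightarrow> tensor_eq M N R ract lact [(m, sum_list ns)] (map (\<lambda>n. (m, n)) ns)"
proof (induction ns)
  case Nil then show ?case using te_zero_r[OF N0 m] by simp
next
  case (Cons n ns)
  have sn: "sum_list ns \<in> N" using sum_list_closed[OF N0 Np] Cons.prems by auto
  have "tensor_eq M N R ract lact [(m, n + sum_list ns)] [(m, n), (m, sum_list ns)]"
    using Cons.prems sn m Np by (intro te_gen2) auto
  moreover have "tensor_eq M N R ract lact ([(m, n)] @ [(m, sum_list ns)]) ([(m, n)] @ map (\<lambda>n. (m, n)) ns)"
    using Cons m by (intro te_append te_refl) auto
  ultimately show ?case by (auto intro: te_trans)
qed

lemma lift_list:
  fixes Phi :: "'m::ab_group_add \<times> 'n::ab_group_add \<Rightarrow> ('m2::ab_group_add \<times> 'n2::ab_group_add) list"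
  assumes T: "tensor_eq M N R ract lact L L'"
    and S: "\<And>p. p \<in> M \<times> N \<Longrightarrow> set (Phi p) \<subseteq> M2 \<times> N2"
    and A1: "\<And>m m' n. m \<in> M \<Longrightarrow> m' \<in> M \<Longrightarrow> n \<in> N \<Longrightarrow>
       tensor_eq M2 N2 R2 ract2 lact2 (Phi (m + m', n)) (Phi (m, n) @ Phi (m', n))"
    and A2: "\<And>m n n'. m \<in> M \<Longrightarrow> n \<in> N \<Longrightarrow> n' \<in> N \<Longrightarrow>
       tensor_eq M2 N2 R2 ract2 lact2 (Phi (m, n + n')) (Phi (m, n) @ Phi (m, n'))"
    and A3: "\<And>m r n. m \<in> M \<Longrightarrow> r \<in> R \<Longrightarrow> n \<in> N \<Longrightarrow>
       tensor_eq M2 N2 R2 ract2 lact2 (Phi (ract m r, n)) (Phi (m, lact r n))"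
  shows "tensor_eq M2 N2 R2 ract2 lact2 (concat (map Phi L)) (concat (map Phi L'))"
proof -
  define F where "F = (\<lambda>p. fcount (Phi p))"
  define Z where "Z = zspan (tensor_rels M2 N2 R2 ract2 lact2)"
  have conv: "(\<lambda>q. fcount X q - fcount Y q) \<in> Z \<Longrightarrow> fcount X - fcount Y \<in> Z" for X Y
    by (simp add: fun_diff_def)
  have g: "\<forall>f\<in>tensor_rels M N R ract lact. \<exists>R1 R2. f = (\<lambda>q. fcount R1 q - fcount R2 q) \<and>
      sum_list (map F R1) - sum_list (map F R2) \<in> Z"
  proof (rule tensor_rels_gens)
    fix m m' n assume a: "m \<in> M" "m' \<in> M" "n \<in> N"
    show "sum_list (map F [(m + m', n)]) - sum_list (map F [(m, n), (m', n)]) \<in> Z"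
      using conv[OF A1[OF a, unfolded tensor_eq_def, THEN conjunct2, THEN conjunct2, folded Z_def]]
      by (simp add: F_def fcount_append)
  next
    fix m n n' assume a: "m \<in> M" "n \<in> N" "n' \<in> N"
    show "sum_list (map F [(m, n + n')]) - sum_list (map F [(m, n), (m, n')]) \<in> Z"
      using conv[OF A2[OF a, unfolded tensor_eq_def, THEN conjunct2, THEN conjunct2, folded Z_def]]
      by (simp add: F_def fcount_append)
  next
    fix m r n assume a: "m \<in> M" "r \<in> R" "n \<in> N"
    show "sum_list (map F [(ract m r, n)]) - sum_list (map F [(m, lact r n)]) \<in> Z"
      using conv[OF A3[OF a, unfolded tensor_eq_def, THEN conjunct2, THEN conjunct2, folded Z_def]]
      by (simp add: F_def)
  qed
  have core: "\<forall>La L'a. (\<lambda>q. fcount L q - fcount L' q) = (\<lambda>q. fcount La q - fcount L'a q) \<longrightarrow>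
      sum_list (map F La) - sum_list (map F L'a) \<in> Z"
    apply (rule lift_core[OF _ g])
    using T apply (simp add: tensor_eq_def)
    by (simp_all add: Z_def zspan_zero' zspan_plus' zspan_minus')
  have "sum_list (map F L) - sum_list (map F L') \<in> Z"
    using core by blast
  then have "fcount (concat (map Phi L)) - fcount (concat (map Phi L')) \<in> Z"
    by (simp only: fcount_concat F_def)
  then have "(\<lambda>q. fcount (concat (map Phi L)) q - fcount (concat (map Phi L')) q) \<in> Z"
    by (simp only: fun_diff_def)
  moreover have "set (concat (map Phi L)) \<subseteq> M2 \<times> N2" "set (concat (map Phi L')) \<subseteq> M2 \<times> N2"
    using T S unfolding tensor_eq_def by fastforce+
  ultimately show ?thesis unfolding tensor_eq_def Z_def by simp
qed



lemma ktensor_te: "ktensor_eq M sM N sN = tensor_eq M N UNIV (\<lambda>m c. sM c m) sN"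
  by (simp add: ktensor_eq_def)

lemma te_sets: "tensor_eq M N R ract lact xs ys \<Longrightarrow> set xs \<subseteq> M \<times> N \<and> set ys \<subseteq> M \<times> N"
  by (simp add: tensor_eq_def)

lemma te_map:
  assumes "\<And>p. p \<in> set xs \<Longrightarrow> tensor_eq M N R ract lact [f p] [g p]"
  shows "tensor_eq M N R ract lact (map f xs) (map g xs)"
proof -
  have "tensor_eq M N R ract lact (concat (map (\<lambda>p. [f p]) xs)) (concat (map (\<lambda>p. [g p]) xs))"
    using assms by (rule te_concat)
  moreover have "concat (map (\<lambda>p. [f p]) xs) = map f xs" "concat (map (\<lambda>p. [g p]) xs) = map g xs"
    by (induction xs) auto
  ultimately show ?thesis by simp
qed

lemma mset_concat_two: "mset (concat (map (\<lambda>x. [u x, v x]) xs)) = mset (map u xs @ map v xs)"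
  by (induction xs) auto

lemma te_split:
  assumes "\<And>p. p \<in> set xs \<Longrightarrow> tensor_eq M N R ract lact [f p] [u p, v p]"
  shows "tensor_eq M N R ract lact (map f xs) (map u xs @ map v xs)"
proof -
  have 1: "tensor_eq M N R ract lact (concat (map (\<lambda>p. [f p]) xs)) (concat (map (\<lambda>p. [u p, v p]) xs))"
    using assms by (rule te_concat)
  have "concat (map (\<lambda>p. [f p]) xs) = map f xs" by (induction xs) auto
  then have 2: "tensor_eq M N R ract lact (map f xs) (concat (map (\<lambda>p. [u p, v p]) xs))" using 1 by simp
  have "tensor_eq M N R ract lact (concat (map (\<lambda>p. [u p, v p]) xs)) (map u xs @ map v xs)"
    using te_sets[OF 2] by (intro te_perm mset_concat_two) auto
  then show ?thesis using 2 by (rule te_trans[rotated])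
qed

lemma mset_swap:
  "mset (concat (map (\<lambda>p. map (\<lambda>j. F p j) J) P)) = mset (concat (map (\<lambda>j. map (\<lambda>p. F p j) P) J))"
proof (induction P)
  case Nil then show ?case by (induction J) auto
next
  case (Cons a P)
  have "mset (concat (map (\<lambda>j. map (\<lambda>p. F p j) (a # P)) J)) =
        mset (map (\<lambda>j. F a j) J) + mset (concat (map (\<lambda>j. map (\<lambda>p. F p j) P) J))"
    by (induction J) (auto simp: ac_simps)
  then show ?case using Cons by simp
qed

lemma sum_list_swap:
  fixes F :: "'p \<Rightarrow> 'j \<Rightarrow> 'g::comm_monoid_add"
  shows "sum_list (map (\<lambda>p. sum_list (map (\<lambda>j. F p j) J)) P) = sum_list (map (\<lambda>j. sum_list (map (\<lambda>p. F p j) P)) J)"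
proof (induction P)
  case Nil then show ?case by (induction J) auto
next
  case (Cons a P)
  then show ?case by (simp add: sum_list_addf)
qed

lemma sum_list_concat_map:
  "sum_list (map F (concat (map G L))) = sum_list (map (\<lambda>x. sum_list (map F (G x))) L)"
  by (induction L) auto

locale setting =
  fixes Hc :: "'x \<Rightarrow> 'x \<Rightarrow> 'h::ab_group_add set" and sH :: "'k::comm_ring_1 \<Rightarrow> 'h \<Rightarrow> 'h"
    and mH :: "'x \<Rightarrow> 'x \<Rightarrow> 'x \<Rightarrow> 'h \<Rightarrow> 'h \<Rightarrow> 'h" and eH :: "'x \<Rightarrow> 'h"
    and Delta :: "'x \<Rightarrow> 'x \<Rightarrow> 'h \<Rightarrow> ('h \<times> 'h) list" and eps :: "'x \<Rightarrow> 'x \<Rightarrow> 'h \<Rightarrow> 'k"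
    and Ac :: "'x \<Rightarrow> 'x \<Rightarrow> 'a::ab_group_add set" and sA :: "'k \<Rightarrow> 'a \<Rightarrow> 'a"
    and mA :: "'x \<Rightarrow> 'x \<Rightarrow> 'x \<Rightarrow> 'a \<Rightarrow> 'a \<Rightarrow> 'a" and eA :: "'x \<Rightarrow> 'a"
    and rho :: "'x \<Rightarrow> 'x \<Rightarrow> 'a \<Rightarrow> ('a \<times> 'h) list"
  assumes H: "semi_hopf_cat Hc sH mH eH Delta eps"
    and A: "comodule_cat Hc sH mH eH Delta eps Ac sA mA eA rho"
begin

lemma klinA: "klin_cat Ac sA mA eA" using A by (simp add: comodule_cat_def)
lemma klinH: "klin_cat Hc sH mH eH" using H by (simp add: semi_hopf_cat_def)

lemma kmodA: "kmodule (Ac u v) sA" using klinA by (simp add: klin_cat_def)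
lemma kmodH: "kmodule (Hc u v) sH" using klinH by (simp add: klin_cat_def)

lemma A0: "0 \<in> Ac u v" using kmodA by (simp add: kmodule_def)
lemma Aadd: "a \<in> Ac u v \<Longrightarrow> b \<in> Ac u v \<Longrightarrow> a + b \<in> Ac u v" using kmodA by (simp add: kmodule_def)
lemma Aadd': "\<forall>a\<in>Ac u v. \<forall>b\<in>Ac u v. a + b \<in> Ac u v" using Aadd by blast
lemma As: "a \<in> Ac u v \<Longrightarrow> sA c a \<in> Ac u v" using kmodA by (simp add: kmodule_def)
lemma As_add: "a \<in> Ac u v \<Longrightarrow> b \<in> Ac u v \<Longrightarrow> sA c (a + b) = sA c a + sA c b" using kmodA[of u v] by (simp add: kmodule_def)
lemma As_addc: "a \<in> Ac u v \<Longrightarrow> sA (c + d) a = sA c a + sA d a" using kmodA[of u v] by (simp add: kmodule_def)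
lemma As_mult: "a \<in> Ac u v \<Longrightarrow> sA (c * d) a = sA c (sA d a)" using kmodA[of u v] by (simp add: kmodule_def)
lemma As_one: "a \<in> Ac u v \<Longrightarrow> sA 1 a = a" using kmodA[of u v] by (simp add: kmodule_def)
lemma As_zero: "sA c 0 = 0"
proof -
  have "sA c (0 + 0) = sA c 0 + sA c (0::'a)" by (rule As_add[OF A0 A0])
  then show ?thesis by simp
qed

lemma H0: "0 \<in> Hc u v" using kmodH by (simp add: kmodule_def)
lemma Hadd: "a \<in> Hc u v \<Longrightarrow> b \<in> Hc u v \<Longrightarrow> a + b \<in> Hc u v" using kmodH by (simp add: kmodule_def)
lemma Hadd': "\<forall>a\<in>Hc u v. \<forall>b\<in>Hc u v. a + b \<in> Hc u v" using Hadd by blast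
lemma Hs: "a \<in> Hc u v \<Longrightarrow> sH c a \<in> Hc u v" using kmodH by (simp add: kmodule_def)

lemma mA_in: "a \<in> Ac u v \<Longrightarrow> b \<in> Ac v w \<Longrightarrow> mA u v w a b \<in> Ac u w"
  using klinA by (simp add: klin_cat_def)
lemma mA_addl: "a \<in> Ac u v \<Longrightarrow> a' \<in> Ac u v \<Longrightarrow> b \<in> Ac v w \<Longrightarrow> mA u v w (a + a') b = mA u v w a b + mA u v w a' b"
  using klinA by (simp add: klin_cat_def)
lemma mA_addr: "a \<in> Ac u v \<Longrightarrow> b \<in> Ac v w \<Longrightarrow> b' \<in> Ac v w \<Longrightarrow> mA u v w a (b + b') = mA u v w a b + mA u v w a b'"
  using klinA by (simp add: klin_cat_def)
lemma mA_sl: "a \<in> Ac u v \<Longrightarrow> b \<in> Ac v w \<Longrightarrow> mA u v w (sA c a) b = sA c (mA u v w a b)"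
  using klinA by (simp add: klin_cat_def)
lemma mA_sr: "a \<in> Ac u v \<Longrightarrow> b \<in> Ac v w \<Longrightarrow> mA u v w a (sA c b) = sA c (mA u v w a b)"
  using klinA by (simp add: klin_cat_def)
lemma mA_assoc: "a \<in> Ac t u \<Longrightarrow> b \<in> Ac u v \<Longrightarrow> c \<in> Ac v w \<Longrightarrow>
    mA t v w (mA t u v a b) c = mA t u w a (mA u v w b c)"
  using klinA by (simp add: klin_cat_def)
lemma eA_in: "eA u \<in> Ac u u" using klinA by (simp add: klin_cat_def)
lemma mA_unitl: "a \<in> Ac u v \<Longrightarrow> mA u u v (eA u) a = a" using klinA by (simp add: klin_cat_def)
lemma mA_unitr: "a \<in> Ac u v \<Longrightarrow> mA u v v a (eA v) = a" using klinA by (simp add: klin_cat_def)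

lemma mA_zero_l: "b \<in> Ac v w \<Longrightarrow> mA u v w 0 b = 0"
proof -
  assume b: "b \<in> Ac v w"
  have "mA u v w (0 + 0) b = mA u v w 0 b + mA u v w 0 b" using mA_addl[OF A0 A0 b] .
  then show ?thesis by simp
qed
lemma mA_zero_r: "a \<in> Ac u v \<Longrightarrow> mA u v w a 0 = 0"
proof -
  assume a: "a \<in> Ac u v"
  have "mA u v w a (0 + 0) = mA u v w a 0 + mA u v w a 0" using mA_addr[OF a A0 A0] .
  then show ?thesis by simp
qed

lemma mA_sum_r: "a \<in> Ac u v \<Longrightarrow> (\<And>j. j \<in> set J \<Longrightarrow> F j \<in> Ac v w) \<Longrightarrow>
    mA u v w a (sum_list (map F J)) = sum_list (map (\<lambda>j. mA u v w a (F j)) J)"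
proof (induction J)
  case Nil then show ?case by (simp add: mA_zero_r)
next
  case (Cons j J)
  have "sum_list (map F J) \<in> Ac v w" using Cons.prems by (intro sum_list_closed[OF A0 Aadd']) auto
  then show ?case using Cons by (simp add: mA_addr)
qed

lemma mA_sum_l: "b \<in> Ac v w \<Longrightarrow> (\<And>j. j \<in> set J \<Longrightarrow> F j \<in> Ac u v) \<Longrightarrow>
    mA u v w (sum_list (map F J)) b = sum_list (map (\<lambda>j. mA u v w (F j) b) J)"
proof (induction J)
  case Nil then show ?case by (simp add: mA_zero_l)
next
  case (Cons j J)
  have "sum_list (map F J) \<in> Ac u v" using Cons.prems by (intro sum_list_closed[OF A0 Aadd']) auto
  then show ?case using Cons by (simp add: mA_addl)
qed

lemma sA_sum: "(\<And>j. j \<in> set J \<Longrightarrow> F j \<in> Ac u v) \<Longrightarrow>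
    sA c (sum_list (map F J)) = sum_list (map (\<lambda>j. sA c (F j)) J)"
proof (induction J)
  case Nil then show ?case by (simp add: As_zero)
next
  case (Cons j J)
  have s: "sum_list (map F J) \<in> Ac u v" using Cons.prems by (intro sum_list_closed[OF A0 Aadd']) auto
  have "F j \<in> Ac u v" using Cons.prems by simp
  then show ?case using Cons by (simp add: As_add[OF _ s])
qed

lemma sum_in_A: "(\<And>j. j \<in> set J \<Longrightarrow> F j \<in> Ac u v) \<Longrightarrow> sum_list (map F J) \<in> Ac u v"
  by (intro sum_list_closed[OF A0 Aadd']) auto

lemma mH_in: "a \<in> Hc u v \<Longrightarrow> b \<in> Hc v w \<Longrightarrow> mH u v w a b \<in> Hc u w"
  using klinH by (simp add: klin_cat_def)
lemma mH_addl: "a \<in> Hc u v \<Longrightarrow> a' \<in> Hc u v \<Longrightarrow> b \<in> Hc v w \<Longrightarrow> mH u v w (a + a') b = mH u v w a b + mH u v w a' b"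
  using klinH by (simp add: klin_cat_def)
lemma mH_sl: "a \<in> Hc u v \<Longrightarrow> b \<in> Hc v w \<Longrightarrow> mH u v w (sH c a) b = sH c (mH u v w a b)"
  using klinH by (simp add: klin_cat_def)
lemma mH_unitl: "a \<in> Hc u v \<Longrightarrow> mH u u v (eH u) a = a" using klinH by (simp add: klin_cat_def)

lemma rho_set: "a \<in> Ac u v \<Longrightarrow> set (rho u v a) \<subseteq> Ac u v \<times> Hc u v"
  using A by (simp add: comodule_cat_def)
lemma rho_add: "a \<in> Ac u v \<Longrightarrow> a' \<in> Ac u v \<Longrightarrow>
    ktensor_eq (Ac u v) sA (Hc u v) sH (rho u v (a + a')) (rho u v a @ rho u v a')"
  using A by (simp add: comodule_cat_def)
lemma rho_mult: "a \<in> Ac u v \<Longrightarrow> b \<in> Ac v w \<Longrightarrow>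
    ktensor_eq (Ac u w) sA (Hc u w) sH (rho u w (mA u v w a b))
          (concat (map (\<lambda>(a0, a1). map (\<lambda>(b0, b1). (mA u v w a0 b0, mH u v w a1 b1))
                          (rho v w b)) (rho u v a)))"
  using A by (simp add: comodule_cat_def)

abbreviation "B u \<equiv> coinv Hc sH eH Ac sA rho u"

lemma B_sub: "b \<in> B u \<Longrightarrow> b \<in> Ac u u" by (simp add: coinv_def)
lemma B_rho: "b \<in> B u \<Longrightarrow> ktensor_eq (Ac u u) sA (Hc u u) sH (rho u u b) [(b, eH u)]"
  by (simp add: coinv_def)
lemma eA_B: "eA u \<in> B u"
  using A eA_in by (simp add: comodule_cat_def coinv_def)

end



lemma concat_single_map: "concat (map (\<lambda>p. [F p]) L) = map F L"
  by (induction L) auto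

lemma concat_map_concat: "concat (map f (concat (map g L))) = concat (map (\<lambda>x. concat (map f (g x))) L)"
  by (induction L) auto

lemma sum_map_cong:
  "(\<And>a0 h. (a0, h) \<in> set L \<Longrightarrow> F a0 h = G a0 h) \<Longrightarrow>
   sum_list (map (\<lambda>(a0, h). F a0 h) L) = sum_list (map (\<lambda>(a0, h). G a0 h) L)"
  by (rule arg_cong[where f = sum_list], rule map_cong) auto

locale gdata = setting Hc sH mH eH Delta eps Ac sA mA eA rho
  for Hc :: "'x \<Rightarrow> 'x \<Rightarrow> 'h::ab_group_add set" and sH :: "'k::comm_ring_1 \<Rightarrow> 'h \<Rightarrow> 'h"
    and mH and eH and Delta and eps
    and Ac :: "'x \<Rightarrow> 'x \<Rightarrow> 'a::ab_group_add set" and sA and mA and eA and rho +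
  fixes x y :: 'x and n :: nat and f :: "nat \<Rightarrow> 'h \<Rightarrow> 'k" and hb :: "nat \<Rightarrow> 'h"
    and m :: nat and phi :: "nat \<Rightarrow> 'a \<Rightarrow> 'a" and e :: "nat \<Rightarrow> 'a" and g :: "nat \<Rightarrow> 'h \<Rightarrow> 'a"
  assumes f_add: "h \<in> Hc x y \<Longrightarrow> h' \<in> Hc x y \<Longrightarrow> f i (h + h') = f i h + f i h'"
    and f_s: "h \<in> Hc x y \<Longrightarrow> f i (sH c h) = c * f i h"
    and hb_in: "hb i \<in> Hc x y"
    and H_exp: "h \<in> Hc x y \<Longrightarrow> h = sum_list (map (\<lambda>i. sH (f i h) (hb i)) [0..<n])"
    and phi_B: "a \<in> Ac x y \<Longrightarrow> phi j a \<in> B x"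
    and e_in: "e j \<in> Ac x y"
    and A_exp: "a \<in> Ac x y \<Longrightarrow> a = sum_list (map (\<lambda>j. mA x x y (phi j a) (e j)) [0..<m])"
    and g_hom: "g j \<in> Hom UNIV (Hc x y) sH (Ac y x) sA"
    and g_delta: "a \<in> Ac x y \<Longrightarrow> sum_list (map (\<lambda>(a0, h). mA x y x a0 (g j h)) (rho x y a)) = phi j a"
    and inj_yy: "inj_on (delta_map Ac mA rho x y y) (Hom UNIV (Hc x y) sH (Ac y y) sA)"
begin

lemma g_in: "h \<in> Hc x y \<Longrightarrow> g j h \<in> Ac y x"
  using g_hom by (simp add: Hom_def lin_map_def)
lemma g_add: "h \<in> Hc x y \<Longrightarrow> h' \<in> Hc x y \<Longrightarrow> g j (h + h') = g j h + g j h'"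
  using g_hom by (simp add: Hom_def lin_map_def)
lemma g_s: "h \<in> Hc x y \<Longrightarrow> g j (sH c h) = sA c (g j h)"
  using g_hom by (simp add: Hom_def lin_map_def)

lemma lmult_resp:
  assumes a: "a \<in> Ac w x" and K: "ktensor_eq (Ac x y) sA (Hc x y) sH L L'"
  shows "ktensor_eq (Ac w y) sA (Hc x y) sH (map (\<lambda>(a0, h). (mA w x y a a0, h)) L)
           (map (\<lambda>(a0, h). (mA w x y a a0, h)) L')"
proof -
  have c: "tensor_eq (Ac w y) (Hc x y) UNIV (\<lambda>m c. sA c m) sH
      (concat (map (\<lambda>p. [(mA w x y a (fst p), snd p)]) L)) (concat (map (\<lambda>p. [(mA w x y a (fst p), snd p)]) L'))"
  proof (rule lift_list[OF K[unfolded ktensor_te]])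
    fix p assume "p \<in> Ac x y \<times> Hc x y"
    then show "set [(mA w x y a (fst p), snd p)] \<subseteq> Ac w y \<times> Hc x y" using a by (auto simp: mA_in)
  next
    fix m m' n assume "m \<in> Ac x y" "m' \<in> Ac x y" "n \<in> Hc x y"
    then show "tensor_eq (Ac w y) (Hc x y) UNIV (\<lambda>m c. sA c m) sH
         [(mA w x y a (fst (m + m', n)), snd (m + m', n))]
         ([(mA w x y a (fst (m, n)), snd (m, n))] @ [(mA w x y a (fst (m', n)), snd (m', n))])"
      using a by (simp add: mA_addr) (intro te_gen1; simp add: mA_in Aadd)
  next
    fix m n n' assume "m \<in> Ac x y" "n \<in> Hc x y" "n' \<in> Hc x y"
    then show "tensor_eq (Ac w y) (Hc x y) UNIV (\<lambda>m c. sA c m) sH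
         [(mA w x y a (fst (m, n + n')), snd (m, n + n'))]
         ([(mA w x y a (fst (m, n)), snd (m, n))] @ [(mA w x y a (fst (m, n')), snd (m, n'))])"
      using a by simp (intro te_gen2; simp add: mA_in Hadd)
  next
    fix m r n assume "m \<in> Ac x y" "r \<in> (UNIV::'k set)" "n \<in> Hc x y"
    then show "tensor_eq (Ac w y) (Hc x y) UNIV (\<lambda>m c. sA c m) sH
         [(mA w x y a (fst (sA r m, n)), snd (sA r m, n))] [(mA w x y a (fst (m, sH r n)), snd (m, sH r n))]"
      using a by (simp add: mA_sr) (intro te_gen3; simp add: mA_in Hs As)
  qed
  have eq: "(\<lambda>p. (mA w x y a (fst p), snd p)) = (\<lambda>(a0, h). (mA w x y a a0, h))" by auto
  show ?thesis using c unfolding ktensor_te concat_single_map eq by blast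
qed

lemma coinv_left:
  assumes b: "b \<in> B x" and a: "a' \<in> Ac x y"
  shows "ktensor_eq (Ac x y) sA (Hc x y) sH (rho x y (mA x x y b a'))
           (map (\<lambda>(a0, h). (mA x x y b a0, h)) (rho x y a'))"
proof -
  define Phi where "Phi = (\<lambda>(b0, b1). map (\<lambda>(a0, h). (mA x x y b0 a0, mH x x y b1 h)) (rho x y a'))"
  have rs: "set (rho x y a') \<subseteq> Ac x y \<times> Hc x y" using rho_set[OF a] .
  have 1: "ktensor_eq (Ac x y) sA (Hc x y) sH (rho x y (mA x x y b a')) (concat (map Phi (rho x x b)))"
    using rho_mult[OF B_sub[OF b] a] unfolding Phi_def .
  let ?T = "tensor_eq (Ac x y) (Hc x y) UNIV (\<lambda>m c. sA c m) sH"
  have 2: "?T (concat (map Phi (rho x x b))) (concat (map Phi [(b, eH x)]))"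
  proof (rule lift_list[OF B_rho[OF b, unfolded ktensor_te]])
    fix p assume "p \<in> Ac x x \<times> Hc x x"
    then show "set (Phi p) \<subseteq> Ac x y \<times> Hc x y" using rs
      by (auto simp: Phi_def mA_in mH_in)
  next
    fix b0 b0' b1 assume h: "b0 \<in> Ac x x" "b0' \<in> Ac x x" "b1 \<in> Hc x x"
    show "?T (Phi (b0 + b0', b1)) (Phi (b0, b1) @ Phi (b0', b1))"
      unfolding Phi_def prod.case
    proof (rule te_split)
      fix p assume "p \<in> set (rho x y a')"
      then obtain a0 hh where p: "p = (a0, hh)" "a0 \<in> Ac x y" "hh \<in> Hc x y" using rs by auto
      show "?T [case p of (a0, h) \<Rightarrow> (mA x x y (b0 + b0') a0, mH x x y b1 h)]
              [case p of (a0, h) \<Rightarrow> (mA x x y b0 a0, mH x x y b1 h), case p of (a0, h) \<Rightarrow> (mA x x y b0' a0, mH x x y b1 h)]"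
        using p h by (simp add: mA_addl) (intro te_gen1; simp add: mA_in mH_in Aadd)
    qed
  next
    fix b0 b1 b1' assume h: "b0 \<in> Ac x x" "b1 \<in> Hc x x" "b1' \<in> Hc x x"
    show "?T (Phi (b0, b1 + b1')) (Phi (b0, b1) @ Phi (b0, b1'))"
      unfolding Phi_def prod.case
    proof (rule te_split)
      fix p assume "p \<in> set (rho x y a')"
      then obtain a0 hh where p: "p = (a0, hh)" "a0 \<in> Ac x y" "hh \<in> Hc x y" using rs by auto
      show "?T [case p of (a0, h) \<Rightarrow> (mA x x y b0 a0, mH x x y (b1 + b1') h)]
              [case p of (a0, h) \<Rightarrow> (mA x x y b0 a0, mH x x y b1 h), case p of (a0, h) \<Rightarrow> (mA x x y b0 a0, mH x x y b1' h)]"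
        using p h by (simp add: mH_addl) (intro te_gen2; simp add: mA_in mH_in Hadd)
    qed
  next
    fix b0 c b1 assume h: "b0 \<in> Ac x x" "c \<in> (UNIV::'k set)" "b1 \<in> Hc x x"
    show "?T (Phi (sA c b0, b1)) (Phi (b0, sH c b1))"
      unfolding Phi_def prod.case
    proof (rule te_map)
      fix p assume "p \<in> set (rho x y a')"
      then obtain a0 hh where p: "p = (a0, hh)" "a0 \<in> Ac x y" "hh \<in> Hc x y" using rs by auto
      show "?T [case p of (a0, h) \<Rightarrow> (mA x x y (sA c b0) a0, mH x x y b1 h)]
              [case p of (a0, h) \<Rightarrow> (mA x x y b0 a0, mH x x y (sH c b1) h)]"
        using p h by (simp add: mA_sl mH_sl) (intro te_gen3; simp add: mA_in mH_in As Hs)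
    qed
  qed
  have 3: "concat (map Phi [(b, eH x)]) = map (\<lambda>(a0, h). (mA x x y b a0, h)) (rho x y a')"
    unfolding Phi_def using rs by (auto simp: mH_unitl intro!: map_cong)
  show ?thesis using te_trans[OF 1[unfolded ktensor_te] 2] 3 by (simp add: ktensor_te)
qed


definition W :: "nat \<Rightarrow> 'a \<Rightarrow> 'a" where
  "W i ee = sum_list (map (\<lambda>(a0, h). sA (f i h) a0) (rho x y ee))"

lemma Wl_resp:
  assumes K: "ktensor_eq (Ac x y) sA (Hc x y) sH L L'"
  shows "sum_list (map (\<lambda>(a0, h). sA (f i h) a0) L) = sum_list (map (\<lambda>(a0, h). sA (f i h) a0) L')"
proof (rule lift_scalar[OF K[unfolded ktensor_te]])
  fix a a' h assume "a \<in> Ac x y" "a' \<in> Ac x y" "h \<in> Hc x y"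
  then show "(case (a + a', h) of (a0, h) \<Rightarrow> sA (f i h) a0) =
      (case (a, h) of (a0, h) \<Rightarrow> sA (f i h) a0) + (case (a', h) of (a0, h) \<Rightarrow> sA (f i h) a0)"
    by (simp add: As_add)
next
  fix a h h' assume "a \<in> Ac x y" "h \<in> Hc x y" "h' \<in> Hc x y"
  then show "(case (a, h + h') of (a0, h) \<Rightarrow> sA (f i h) a0) =
      (case (a, h) of (a0, h) \<Rightarrow> sA (f i h) a0) + (case (a, h') of (a0, h) \<Rightarrow> sA (f i h) a0)"
    by (simp add: As_addc f_add)
next
  fix a r h assume a: "a \<in> Ac x y" "r \<in> (UNIV :: 'k set)" "h \<in> Hc x y"
  have "sA (f i h) (sA r a) = sA (f i h * r) a" using a by (simp add: As_mult)
  also have "\<dots> = sA (f i (sH r h)) a" using a by (simp add: f_s mult.commute)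
  finally show "(case (sA r a, h) of (a0, h) \<Rightarrow> sA (f i h) a0) = (case (a, sH r h) of (a0, h) \<Rightarrow> sA (f i h) a0)"
    by simp
qed

lemma W_add: "a \<in> Ac x y \<Longrightarrow> a' \<in> Ac x y \<Longrightarrow> W i (a + a') = W i a + W i a'"
  unfolding W_def using Wl_resp[OF rho_add] by simp

lemma W_zero: "W i 0 = 0"
  using W_add[OF A0 A0, of i] by simp

lemma W_in: "a \<in> Ac x y \<Longrightarrow> W i a \<in> Ac x y"
  unfolding W_def using rho_set[of a x y] by (intro sum_in_A) (auto simp: As)

lemma W_left:
  assumes b: "b \<in> B x" and a: "a \<in> Ac x y"
  shows "W i (mA x x y b a) = mA x x y b (W i a)"
proof -
  have rs: "set (rho x y a) \<subseteq> Ac x y \<times> Hc x y" using rho_set[OF a] .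
  have "W i (mA x x y b a) = sum_list (map (\<lambda>(a0, h). sA (f i h) a0) (map (\<lambda>(a0, h). (mA x x y b a0, h)) (rho x y a)))"
    unfolding W_def using Wl_resp[OF coinv_left[OF b a]] .
  also have "\<dots> = sum_list (map (\<lambda>(a0, h). sA (f i h) (mA x x y b a0)) (rho x y a))"
    by (simp add: o_def case_prod_unfold)
  also have "\<dots> = sum_list (map (\<lambda>(a0, h). mA x x y b (sA (f i h) a0)) (rho x y a))"
    using rs B_sub[OF b] by (intro sum_map_cong) (auto simp: mA_sr)
  also have "\<dots> = mA x x y b (W i a)"
    unfolding W_def using rs B_sub[OF b]
    by (subst mA_sum_r) (auto simp: As case_prod_unfold)
  finally show ?thesis .
qed

lemma W_sum: "(\<And>j. j \<in> set J \<Longrightarrow> u j \<in> Ac x y) \<Longrightarrow>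
    W i (sum_list (map u J)) = sum_list (map (\<lambda>j. W i (u j)) J)"
proof (induction J)
  case Nil then show ?case by (simp add: W_zero)
next
  case (Cons j J)
  have "sum_list (map u J) \<in> Ac x y" using Cons.prems by (intro sum_in_A) auto
  then show ?case using Cons by (simp add: W_add)
qed

lemma W_exp: "a \<in> Ac x y \<Longrightarrow> sum_list (map (\<lambda>j. mA x x y (phi j a) (W i (e j))) [0..<m]) = W i a"
proof -
  assume a: "a \<in> Ac x y"
  have "sum_list (map (\<lambda>j. mA x x y (phi j a) (W i (e j))) [0..<m]) =
        sum_list (map (\<lambda>j. W i (mA x x y (phi j a) (e j))) [0..<m])"
    using a by (intro arg_cong[where f = sum_list] map_cong) (auto simp: W_left phi_B e_in)
  also have "\<dots> = W i (sum_list (map (\<lambda>j. mA x x y (phi j a) (e j)) [0..<m]))"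
    using a by (intro W_sum[symmetric]) (auto simp: mA_in B_sub phi_B e_in)
  also have "\<dots> = W i a" using A_exp[OF a] by simp
  finally show ?thesis .
qed


lemma key:
  assumes h: "h \<in> Hc x y"
  shows "sum_list (map (\<lambda>j. mA y x y (g j h) (W i (e j))) [0..<m]) = sA (f i h) (eA y)"
proof -
  define G where "G = restrict (\<lambda>h. sum_list (map (\<lambda>j. mA y x y (g j h) (W i (e j))) [0..<m])) (Hc x y)"
  define G' where "G' = restrict (\<lambda>h. sA (f i h) (eA y)) (Hc x y)"
  have G_in: "G \<in> Hom UNIV (Hc x y) sH (Ac y y) sA"
    unfolding Hom_def lin_map_def
  proof (intro CollectI conjI ballI)
    fix h assume "h \<in> Hc x y"
    then show "G h \<in> Ac y y" unfolding G_def
      by (auto intro!: sum_in_A simp: mA_in g_in W_in e_in)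
  next
    fix h h' assume hh: "h \<in> Hc x y" "h' \<in> Hc x y"
    then show "G (h + h') = G h + G h'" unfolding G_def
      by (simp add: Hadd g_add mA_addl g_in W_in e_in sum_list_addf)
  next
    fix r h assume hh: "r \<in> (UNIV :: 'k set)" "h \<in> Hc x y"
    then show "G (sH r h) = sA r (G h)" unfolding G_def
      by (simp add: Hs g_s mA_sl g_in W_in e_in) (subst sA_sum[where u = y and v = y]; simp add: mA_in g_in W_in e_in)
  qed (simp add: G_def)
  have G'_in: "G' \<in> Hom UNIV (Hc x y) sH (Ac y y) sA"
    unfolding Hom_def lin_map_def
  proof (intro CollectI conjI ballI)
    fix h assume "h \<in> Hc x y"
    then show "G' h \<in> Ac y y" unfolding G'_def by (simp add: As eA_in)
  next
    fix h h' assume hh: "h \<in> Hc x y" "h' \<in> Hc x y"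
    then show "G' (h + h') = G' h + G' h'" unfolding G'_def
      by (simp add: Hadd f_add As_addc[OF eA_in])
  next
    fix r h assume hh: "r \<in> (UNIV :: 'k set)" "h \<in> Hc x y"
    then show "G' (sH r h) = sA r (G' h)" unfolding G'_def
      by (simp add: Hs f_s As_mult[OF eA_in])
  qed (simp add: G'_def)
  have eqd: "delta_map Ac mA rho x y y G = delta_map Ac mA rho x y y G'"
    unfolding delta_map_def
  proof (rule restrict_ext)
    fix a assume a: "a \<in> Ac x y"
    have rs: "set (rho x y a) \<subseteq> Ac x y \<times> Hc x y" using rho_set[OF a] .
    have "sum_list (map (\<lambda>(a0, h). mA x y y a0 (G h)) (rho x y a)) =
        sum_list (map (\<lambda>(a0, h). sum_list (map (\<lambda>j. mA x x y (mA x y x a0 (g j h)) (W i (e j))) [0..<m])) (rho x y a))"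
    proof (rule sum_map_cong)
      fix a0 hh assume "(a0, hh) \<in> set (rho x y a)"
      then have m: "a0 \<in> Ac x y" "hh \<in> Hc x y" using rs by auto
      then show "mA x y y a0 (G hh) = sum_list (map (\<lambda>j. mA x x y (mA x y x a0 (g j hh)) (W i (e j))) [0..<m])"
        unfolding G_def by (simp, subst mA_sum_r) (auto simp: mA_in g_in W_in e_in mA_assoc)
    qed
    also have "\<dots> = sum_list (map (\<lambda>j. sum_list (map (\<lambda>p. case p of (a0, h) \<Rightarrow> mA x x y (mA x y x a0 (g j h)) (W i (e j))) (rho x y a))) [0..<m])"
      using sum_list_swap[of "\<lambda>p j. case p of (a0, h) \<Rightarrow> mA x x y (mA x y x a0 (g j h)) (W i (e j))" "[0..<m]" "rho x y a"]
      by (simp add: case_prod_unfold)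
    also have "\<dots> = sum_list (map (\<lambda>j. mA x x y (sum_list (map (\<lambda>(a0, h). mA x y x a0 (g j h)) (rho x y a))) (W i (e j))) [0..<m])"
      using rs by (intro arg_cong[where f = sum_list] map_cong refl, subst mA_sum_l)
        (auto simp: W_in e_in mA_in g_in case_prod_unfold)
    also have "\<dots> = sum_list (map (\<lambda>j. mA x x y (phi j a) (W i (e j))) [0..<m])"
      using a by (simp add: g_delta)
    also have "\<dots> = W i a" using W_exp[OF a] .
    also have "\<dots> = sum_list (map (\<lambda>(a0, h). mA x y y a0 (G' h)) (rho x y a))"
      unfolding W_def G'_def using rs
      by (intro sum_map_cong) (auto simp: mA_sr eA_in mA_unitr)
    finally show "sum_list (map (\<lambda>(a0, h). mA x y y a0 (G h)) (rho x y a)) =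
        sum_list (map (\<lambda>(a0, h). mA x y y a0 (G' h)) (rho x y a))" .
  qed
  have "G = G'" using inj_onD[OF inj_yy eqd G_in G'_in] .
  then have "G h = G' h" by simp
  then show ?thesis using h by (simp add: G_def G'_def)
qed


lemma K_expand:
  assumes L: "set L \<subseteq> Ac u v \<times> Hc x y"
  shows "ktensor_eq (Ac u v) sA (Hc x y) sH L
           (map (\<lambda>i. (sum_list (map (\<lambda>(a, h). sA (f i h) a) L), hb i)) [0..<n])"
proof -
  let ?T = "tensor_eq (Ac u v) (Hc x y) UNIV (\<lambda>m c. sA c m) sH"
  define F where "F = (\<lambda>p i. (sA (f i (snd p)) (fst p), hb i))"
  have single: "?T [p] (map (F p) [0..<n])" if p: "p \<in> set L" for p
  proof -
    obtain a h where ah: "p = (a, h)" "a \<in> Ac u v" "h \<in> Hc x y" using p L by (cases p) auto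
    have "?T [(a, sum_list (map (\<lambda>i. sH (f i h) (hb i)) [0..<n]))]
              (map (\<lambda>hh. (a, hh)) (map (\<lambda>i. sH (f i h) (hb i)) [0..<n]))"
      by (rule te_sum_r[OF H0 Hadd' ah(2)]) (auto simp: Hs hb_in)
    then have "?T [(a, h)] (map (\<lambda>hh. (a, hh)) (map (\<lambda>i. sH (f i h) (hb i)) [0..<n]))"
      by (simp only: H_exp[OF ah(3), symmetric])
    then have 1: "?T [(a, h)] (map (\<lambda>i. (a, sH (f i h) (hb i))) [0..<n])"
      by (simp add: o_def)
    have 2: "?T (map (\<lambda>i. (a, sH (f i h) (hb i))) [0..<n]) (map (F p) [0..<n])"
      by (rule te_map, rule te_sym) (auto simp: F_def ah intro!: te_gen3 As hb_in Hs)
    show ?thesis using te_trans[OF 1 2] ah by simp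
  qed
  have "?T (concat (map (\<lambda>p. [p]) L)) (concat (map (\<lambda>p. map (F p) [0..<n]) L))"
    by (rule te_concat) (rule single)
  then have 1: "?T L (concat (map (\<lambda>p. map (F p) [0..<n]) L))"
    by (simp add: concat_single_map)
  have 2: "?T (concat (map (\<lambda>p. map (\<lambda>i. F p i) [0..<n]) L)) (concat (map (\<lambda>i. map (\<lambda>p. F p i) L) [0..<n]))"
    using te_sets[OF 1] by (intro te_perm mset_swap) auto
  have 3: "?T (concat (map (\<lambda>i. map (\<lambda>p. F p i) L) [0..<n]))
     (concat (map (\<lambda>i. [(sum_list (map (\<lambda>(a, h). sA (f i h) a) L), hb i)]) [0..<n]))"
  proof (rule te_concat)
    fix i
    have "?T [(sum_list (map (\<lambda>p. sA (f i (snd p)) (fst p)) L), hb i)]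
             (map (\<lambda>mm. (mm, hb i)) (map (\<lambda>p. sA (f i (snd p)) (fst p)) L))"
    proof (rule te_sum_l[OF A0 Aadd' hb_in])
      show "set (map (\<lambda>p. sA (f i (snd p)) (fst p)) L) \<subseteq> Ac u v"
      proof
        fix mm assume "mm \<in> set (map (\<lambda>p. sA (f i (snd p)) (fst p)) L)"
        then obtain p where p: "p \<in> set L" "mm = sA (f i (snd p)) (fst p)" by auto
        have "fst p \<in> Ac u v" using p(1) L by auto
        then show "mm \<in> Ac u v" using p(2) As by simp
      qed
    qed
    moreover have eq1: "map (\<lambda>p. F p i) L = map (\<lambda>mm. (mm, hb i)) (map (\<lambda>p. sA (f i (snd p)) (fst p)) L)"
      by (simp add: F_def)
    moreover have eq2: "(\<lambda>(a, h). sA (f i h) a) = (\<lambda>p. sA (f i (snd p)) (fst p))"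
      by (rule ext) (simp add: split_beta)
    ultimately show "?T (map (\<lambda>p. F p i) L) [(sum_list (map (\<lambda>(a, h). sA (f i h) a) L), hb i)]"
      using te_sym by metis
  qed
  show ?thesis using te_trans[OF te_trans[OF 1 2] 3] by (simp add: ktensor_te concat_single_map)
qed

lemma K_coord:
  assumes L: "set L \<subseteq> Ac u v \<times> Hc x y" and L': "set L' \<subseteq> Ac u v \<times> Hc x y"
    and c: "\<And>i. sum_list (map (\<lambda>(a, h). sA (f i h) a) L) = sum_list (map (\<lambda>(a, h). sA (f i h) a) L')"
  shows "ktensor_eq (Ac u v) sA (Hc x y) sH L L'"
proof -
  have e: "map (\<lambda>i. (sum_list (map (\<lambda>(a, h). sA (f i h) a) L), hb i)) [0..<n] =
           map (\<lambda>i. (sum_list (map (\<lambda>(a, h). sA (f i h) a) L'), hb i)) [0..<n]"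
    using c by simp
  show ?thesis
    using te_trans[OF K_expand[OF L, unfolded ktensor_te e] te_sym[OF K_expand[OF L', unfolded ktensor_te]]]
    unfolding ktensor_te .
qed

definition psi1 :: "'x \<Rightarrow> 'a \<times> 'h \<Rightarrow> ('a \<times> 'a) list" where
  "psi1 z = (\<lambda>(a, h). map (\<lambda>j. (mA z y x a (g j h), e j)) [0..<m])"

definition psi :: "'x \<Rightarrow> ('a \<times> 'h) list \<Rightarrow> ('a \<times> 'a) list" where
  "psi z L = concat (map (psi1 z) L)"

abbreviation TB :: "'x \<Rightarrow> ('a \<times> 'a) list \<Rightarrow> ('a \<times> 'a) list \<Rightarrow> bool" where
  "TB z \<equiv> tensor_eq (Ac z x) (Ac x y) (B x) (\<lambda>a b. mA z x x a b) (\<lambda>b a'. mA x x y b a')"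

lemma psi1_set: "a \<in> Ac z y \<Longrightarrow> h \<in> Hc x y \<Longrightarrow> set (psi1 z (a, h)) \<subseteq> Ac z x \<times> Ac x y"
  by (auto simp: psi1_def mA_in g_in e_in)

lemma psi_set: "set L \<subseteq> Ac z y \<times> Hc x y \<Longrightarrow> set (psi z L) \<subseteq> Ac z x \<times> Ac x y"
  unfolding psi_def using psi1_set by fastforce

lemma psi_resp:
  assumes K: "ktensor_eq (Ac z y) sA (Hc x y) sH L L'"
  shows "TB z (psi z L) (psi z L')"
  unfolding psi_def
proof (rule lift_list[OF K[unfolded ktensor_te]])
  fix p assume "p \<in> Ac z y \<times> Hc x y"
  then show "set (psi1 z p) \<subseteq> Ac z x \<times> Ac x y" using psi1_set by (cases p) auto
next
  fix a a' h assume h: "a \<in> Ac z y" "a' \<in> Ac z y" "h \<in> Hc x y"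
  show "TB z (psi1 z (a + a', h)) (psi1 z (a, h) @ psi1 z (a', h))"
    unfolding psi1_def prod.case
    by (rule te_split) (use h in \<open>simp add: mA_addl g_in, intro te_gen1; simp add: mA_in g_in e_in Aadd\<close>)
next
  fix a h h' assume h: "a \<in> Ac z y" "h \<in> Hc x y" "h' \<in> Hc x y"
  show "TB z (psi1 z (a, h + h')) (psi1 z (a, h) @ psi1 z (a, h'))"
    unfolding psi1_def prod.case
    by (rule te_split) (use h in \<open>simp add: g_add mA_addr g_in, intro te_gen1; simp add: mA_in g_in e_in Aadd\<close>)
next
  fix a r h assume h: "a \<in> Ac z y" "r \<in> (UNIV :: 'k set)" "h \<in> Hc x y"
  have eq: "psi1 z (sA r a, h) = psi1 z (a, sH r h)"
    using h by (simp add: psi1_def g_s mA_sl mA_sr g_in)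
  have "TB z (psi1 z (sA r a, h)) (psi1 z (sA r a, h))"
    by (rule te_refl[OF psi1_set[OF As[OF h(1)] h(3)]])
  then show "TB z (psi1 z (sA r a, h)) (psi1 z (a, sH r h))"
    unfolding eq .
qed


lemma can_resp:
  assumes T: "TB z xs ys"
  shows "ktensor_eq (Ac z y) sA (Hc x y) sH (can_map mA rho z x y xs) (can_map mA rho z x y ys)"
  unfolding can_map_def ktensor_te
proof (rule lift_list[OF T])
  let ?T = "tensor_eq (Ac z y) (Hc x y) UNIV (\<lambda>m c. sA c m) sH"
  fix p assume p: "p \<in> Ac z x \<times> Ac x y"
  then obtain a a' where aa: "p = (a, a')" "a \<in> Ac z x" "a' \<in> Ac x y" by auto
  have rs: "set (rho x y a') \<subseteq> Ac x y \<times> Hc x y" using rho_set[OF aa(3)] .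
  show "set (case p of (a, a') \<Rightarrow> map (\<lambda>(a0, h). (mA z x y a a0, h)) (rho x y a')) \<subseteq> Ac z y \<times> Hc x y"
    using aa rs by (auto simp: mA_in)
next
  let ?T = "tensor_eq (Ac z y) (Hc x y) UNIV (\<lambda>m c. sA c m) sH"
  fix a1 a2 a' assume h: "a1 \<in> Ac z x" "a2 \<in> Ac z x" "a' \<in> Ac x y"
  have rs: "set (rho x y a') \<subseteq> Ac x y \<times> Hc x y" using rho_set[OF h(3)] .
  show "?T (case (a1 + a2, a') of (a, a') \<Rightarrow> map (\<lambda>(a0, h). (mA z x y a a0, h)) (rho x y a'))
     ((case (a1, a') of (a, a') \<Rightarrow> map (\<lambda>(a0, h). (mA z x y a a0, h)) (rho x y a')) @
      (case (a2, a') of (a, a') \<Rightarrow> map (\<lambda>(a0, h). (mA z x y a a0, h)) (rho x y a')))"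
    unfolding prod.case
  proof (rule te_split)
    fix p assume "p \<in> set (rho x y a')"
    then obtain a0 hh where p: "p = (a0, hh)" "a0 \<in> Ac x y" "hh \<in> Hc x y" using rs by auto
    show "?T [case p of (a0, h) \<Rightarrow> (mA z x y (a1 + a2) a0, h)]
        [case p of (a0, h) \<Rightarrow> (mA z x y a1 a0, h), case p of (a0, h) \<Rightarrow> (mA z x y a2 a0, h)]"
      using p h by (simp add: mA_addl) (intro te_gen1; simp add: mA_in Aadd)
  qed
next
  let ?T = "tensor_eq (Ac z y) (Hc x y) UNIV (\<lambda>m c. sA c m) sH"
  fix a a1' a2' assume h: "a \<in> Ac z x" "a1' \<in> Ac x y" "a2' \<in> Ac x y"
  show "?T (case (a, a1' + a2') of (a, a') \<Rightarrow> map (\<lambda>(a0, h). (mA z x y a a0, h)) (rho x y a'))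
     ((case (a, a1') of (a, a') \<Rightarrow> map (\<lambda>(a0, h). (mA z x y a a0, h)) (rho x y a')) @
      (case (a, a2') of (a, a') \<Rightarrow> map (\<lambda>(a0, h). (mA z x y a a0, h)) (rho x y a')))"
    using lmult_resp[OF h(1) rho_add[OF h(2,3)], unfolded ktensor_te] by simp
next
  let ?T = "tensor_eq (Ac z y) (Hc x y) UNIV (\<lambda>m c. sA c m) sH"
  fix a b a' assume h: "a \<in> Ac z x" "b \<in> B x" "a' \<in> Ac x y"
  have rs: "set (rho x y a') \<subseteq> Ac x y \<times> Hc x y" using rho_set[OF h(3)] .
  have 1: "?T (map (\<lambda>(a0, h). (mA z x y a a0, h)) (rho x y (mA x x y b a')))
      (map (\<lambda>(a0, h). (mA z x y a a0, h)) (map (\<lambda>(a0, h). (mA x x y b a0, h)) (rho x y a')))"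
    using lmult_resp[OF h(1) coinv_left[OF h(2,3)], unfolded ktensor_te] .
  have 2: "map (\<lambda>(a0, h). (mA z x y a a0, h)) (map (\<lambda>(a0, h). (mA x x y b a0, h)) (rho x y a')) =
      map (\<lambda>(a0, h). (mA z x y (mA z x x a b) a0, h)) (rho x y a')"
    using rs h B_sub[OF h(2)] by (auto simp: mA_assoc)
  show "?T (case (mA z x x a b, a') of (a, a') \<Rightarrow> map (\<lambda>(a0, h). (mA z x y a a0, h)) (rho x y a'))
      (case (a, mA x x y b a') of (a, a') \<Rightarrow> map (\<lambda>(a0, h). (mA z x y a a0, h)) (rho x y a'))"
    using te_sym[OF 1[unfolded 2]] by simp
qed

lemma psi_can_single:
  assumes a: "a \<in> Ac z x" and a': "a' \<in> Ac x y"
  shows "TB z (psi z (map (\<lambda>(a0, h). (mA z x y a a0, h)) (rho x y a'))) [(a, a')]"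
proof -
  define P where "P = rho x y a'"
  have rs: "set P \<subseteq> Ac x y \<times> Hc x y" using rho_set[OF a'] unfolding P_def .
  define X where "X = (\<lambda>p j. mA z y x (mA z x y a (fst p)) (g j (snd p)))"
  have 0: "psi z (map (\<lambda>(a0, h). (mA z x y a a0, h)) P) = concat (map (\<lambda>p. map (\<lambda>j. (X p j, e j)) [0..<m]) P)"
    by (simp add: psi_def psi1_def X_def case_prod_unfold o_def)
  have Xin: "p \<in> set P \<Longrightarrow> X p j \<in> Ac z x" for p j
    using rs a by (auto simp: X_def mA_in g_in)
  have 1: "TB z (concat (map (\<lambda>p. map (\<lambda>j. (X p j, e j)) [0..<m]) P)) (concat (map (\<lambda>j. map (\<lambda>p. (X p j, e j)) P) [0..<m]))"
    by (rule te_perm[OF mset_swap]) (auto simp: Xin e_in)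
  have 2: "TB z (concat (map (\<lambda>j. map (\<lambda>p. (X p j, e j)) P) [0..<m])) (concat (map (\<lambda>j. [(a, mA x x y (phi j a') (e j))]) [0..<m]))"
  proof (rule te_concat)
    fix j
    have "TB z [(sum_list (map (\<lambda>p. X p j) P), e j)] (map (\<lambda>mm. (mm, e j)) (map (\<lambda>p. X p j) P))"
      by (rule te_sum_l[OF A0 Aadd' e_in]) (auto simp: Xin)
    then have s1: "TB z (map (\<lambda>p. (X p j, e j)) P) [(sum_list (map (\<lambda>p. X p j) P), e j)]"
      by (simp add: te_sym o_def)
    have "sum_list (map (\<lambda>p. X p j) P) = sum_list (map (\<lambda>p. mA z x x a (mA x y x (fst p) (g j (snd p)))) P)"
      using rs a by (intro arg_cong[where f = sum_list] map_cong refl) (auto simp: X_def mA_assoc g_in)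
    also have "\<dots> = mA z x x a (sum_list (map (\<lambda>p. mA x y x (fst p) (g j (snd p))) P))"
      using rs a by (subst mA_sum_r) (auto simp: mA_in g_in)
    also have "\<dots> = mA z x x a (phi j a')"
      using g_delta[OF a', of j] by (simp add: P_def case_prod_unfold)
    finally have e1: "sum_list (map (\<lambda>p. X p j) P) = mA z x x a (phi j a')" .
    have s2: "TB z [(mA z x x a (phi j a'), e j)] [(a, mA x x y (phi j a') (e j))]"
      using a phi_B[OF a'] by (intro te_gen3) (auto simp: e_in mA_in B_sub)
    show "TB z (map (\<lambda>p. (X p j, e j)) P) [(a, mA x x y (phi j a') (e j))]"
      using te_trans[OF s1[unfolded e1] s2] .
  qed
  have "TB z [(a, sum_list (map (\<lambda>j. mA x x y (phi j a') (e j)) [0..<m]))]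
      (map (\<lambda>nn. (a, nn)) (map (\<lambda>j. mA x x y (phi j a') (e j)) [0..<m]))"
    using a' by (intro te_sum_r[OF A0 Aadd' a]) (auto simp: mA_in B_sub phi_B e_in)
  then have 3: "TB z (concat (map (\<lambda>j. [(a, mA x x y (phi j a') (e j))]) [0..<m])) [(a, a')]"
    using A_exp[OF a'] by (simp add: concat_single_map te_sym o_def)
  show ?thesis unfolding P_def[symmetric] 0 using te_trans[OF te_trans[OF 1 2] 3] .
qed


lemma psi_can:
  assumes xs: "set xs \<subseteq> Ac z x \<times> Ac x y"
  shows "TB z (psi z (can_map mA rho z x y xs)) xs"
proof -
  define Phi where "Phi = (\<lambda>(a, a'). map (\<lambda>(a0, h). (mA z x y a a0, h)) (rho x y a'))"
  have e: "psi z (can_map mA rho z x y xs) = concat (map (\<lambda>p. psi z (Phi p)) xs)"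
    unfolding can_map_def psi_def Phi_def[symmetric] by (simp add: concat_map_concat)
  have "TB z (concat (map (\<lambda>p. psi z (Phi p)) xs)) (concat (map (\<lambda>p. [p]) xs))"
  proof (rule te_concat)
    fix p assume "p \<in> set xs"
    then obtain a a' where p: "p = (a, a')" "a \<in> Ac z x" "a' \<in> Ac x y" using xs by auto
    show "TB z (psi z (Phi p)) [p]" using psi_can_single[OF p(2,3)] p(1) by (simp add: Phi_def)
  qed
  then show ?thesis unfolding e by (simp add: concat_single_map)
qed

lemma surj_part:
  assumes zs: "set zs \<subseteq> Ac z y \<times> Hc x y"
  shows "ktensor_eq (Ac z y) sA (Hc x y) sH (can_map mA rho z x y (psi z zs)) zs"
proof (rule K_coord)
  have ps: "set (psi z zs) \<subseteq> Ac z x \<times> Ac x y" using psi_set[OF zs] .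
  show "set (can_map mA rho z x y (psi z zs)) \<subseteq> Ac z y \<times> Hc x y"
    using can_resp[OF te_refl[OF ps]] by (simp add: ktensor_te tensor_eq_def)
  show "set zs \<subseteq> Ac z y \<times> Hc x y" by (rule zs)
  fix i
  define F where "F = (\<lambda>(a::'a, h). sA (f i h) a)"
  define Phi where "Phi = (\<lambda>(a, a'). map (\<lambda>(a0, h). (mA z x y a a0, h)) (rho x y a'))"
  have e: "can_map mA rho z x y (psi z zs) = concat (map (\<lambda>p. concat (map Phi (psi1 z p))) zs)"
    unfolding can_map_def psi_def Phi_def[symmetric] by (simp add: concat_map_concat)
  have single: "sum_list (map F (concat (map Phi (psi1 z (a, h))))) = sA (f i h) a"
    if ah: "a \<in> Ac z y" "h \<in> Hc x y" for a h
  proof -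
    define c where "c = (\<lambda>j. mA z y x a (g j h))"
    have cin: "c j \<in> Ac z x" for j using ah by (simp add: c_def mA_in g_in)
    have inner: "sum_list (map F (Phi (c j, e j))) = mA z x y (c j) (W i (e j))" for j
    proof -
      have rs: "set (rho x y (e j)) \<subseteq> Ac x y \<times> Hc x y" using rho_set[OF e_in] .
      have "sum_list (map F (Phi (c j, e j))) = sum_list (map (\<lambda>(a0, h). mA z x y (c j) (sA (f i h) a0)) (rho x y (e j)))"
        unfolding Phi_def F_def using rs cin by (simp add: o_def case_prod_unfold mA_sr)
          (intro arg_cong[where f = sum_list] map_cong refl; auto simp: mA_sr)
      also have "\<dots> = mA z x y (c j) (W i (e j))"
        unfolding W_def using rs cin by (subst mA_sum_r) (auto simp: As case_prod_unfold)
      finally show ?thesis .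
    qed
    have "sum_list (map F (concat (map Phi (psi1 z (a, h))))) = sum_list (map (\<lambda>j. sum_list (map F (Phi (c j, e j)))) [0..<m])"
      by (simp add: sum_list_concat_map psi1_def c_def o_def)
    also have "\<dots> = sum_list (map (\<lambda>j. mA z y y a (mA y x y (g j h) (W i (e j)))) [0..<m])"
      using ah by (intro arg_cong[where f = sum_list] map_cong refl)
        (simp only: inner, simp add: c_def mA_assoc[OF ah(1) g_in[OF ah(2)] W_in[OF e_in]])
    also have "\<dots> = mA z y y a (sum_list (map (\<lambda>j. mA y x y (g j h) (W i (e j))) [0..<m]))"
      using ah by (subst mA_sum_r) (auto simp: mA_in g_in W_in e_in)
    also have "\<dots> = mA z y y a (sA (f i h) (eA y))" using key[OF ah(2)] by simp
    also have "\<dots> = sA (f i h) a" using ah by (simp add: mA_sr eA_in mA_unitr)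
    finally show ?thesis .
  qed
  have "sum_list (map F (can_map mA rho z x y (psi z zs))) = sum_list (map (\<lambda>p. sum_list (map F (concat (map Phi (psi1 z p))))) zs)"
    unfolding e by (simp add: sum_list_concat_map)
  also have "\<dots> = sum_list (map F zs)"
  proof (rule arg_cong[where f = sum_list], rule map_cong[OF refl])
    fix p assume "p \<in> set zs"
    then obtain a h where p: "p = (a, h)" "a \<in> Ac z y" "h \<in> Hc x y" using zs by auto
    have "F (a, h) = sA (f i h) a" by (simp add: F_def)
    then show "sum_list (map F (concat (map Phi (psi1 z p)))) = F p"
      using single[OF p(2,3)] p(1) by simp
  qed
  finally show "sum_list (map (\<lambda>(a, h). sA (f i h) a) (can_map mA rho z x y (psi z zs))) = sum_list (map (\<lambda>(a, h). sA (f i h) a) zs)"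
    unfolding F_def .
qed

lemma galois_z:
  "(\<forall>xs ys. set xs \<subseteq> Ac z x \<times> Ac x y \<longrightarrow> set ys \<subseteq> Ac z x \<times> Ac x y \<longrightarrow>
           (TB z xs ys \<longleftrightarrow> ktensor_eq (Ac z y) sA (Hc x y) sH (can_map mA rho z x y xs) (can_map mA rho z x y ys))) \<and>
   (\<forall>zs. set zs \<subseteq> Ac z y \<times> Hc x y \<longrightarrow>
           (\<exists>xs. set xs \<subseteq> Ac z x \<times> Ac x y \<and>
                 ktensor_eq (Ac z y) sA (Hc x y) sH (can_map mA rho z x y xs) zs))"
proof (intro conjI allI impI)
  fix xs ys assume xs: "set xs \<subseteq> Ac z x \<times> Ac x y" and ys: "set ys \<subseteq> Ac z x \<times> Ac x y"
  show "TB z xs ys \<longleftrightarrow> ktensor_eq (Ac z y) sA (Hc x y) sH (can_map mA rho z x y xs) (can_map mA rho z x y ys)"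
  proof
    assume "TB z xs ys" then show "ktensor_eq (Ac z y) sA (Hc x y) sH (can_map mA rho z x y xs) (can_map mA rho z x y ys)"
      by (rule can_resp)
  next
    assume "ktensor_eq (Ac z y) sA (Hc x y) sH (can_map mA rho z x y xs) (can_map mA rho z x y ys)"
    then have "TB z (psi z (can_map mA rho z x y xs)) (psi z (can_map mA rho z x y ys))" by (rule psi_resp)
    then show "TB z xs ys"
      using te_trans[OF te_sym[OF psi_can[OF xs]] te_trans[OF _ psi_can[OF ys]]] by blast
  qed
next
  fix zs assume zs: "set zs \<subseteq> Ac z y \<times> Hc x y"
  show "\<exists>xs. set xs \<subseteq> Ac z x \<times> Ac x y \<and> ktensor_eq (Ac z y) sA (Hc x y) sH (can_map mA rho z x y xs) zs"
    using psi_set[OF zs] surj_part[OF zs] by blast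
qed

end



lemma freemod_expand:
  assumes pi: "lin_map R (freemod R n) (\<lambda>r v i. mlt r (v i)) M act (pi :: (nat \<Rightarrow> 'r::ab_group_add) \<Rightarrow> 'm::ab_group_add)"
    and R0: "0 \<in> R" and u: "u \<in> R" and mu: "\<And>r. r \<in> R \<Longrightarrow> mlt r u = r"
    and m0: "\<And>r. r \<in> R \<Longrightarrow> mlt r 0 = 0"
    and v: "v \<in> freemod R n"
  shows "pi v = sum_list (map (\<lambda>j. act (v j) (pi (\<lambda>l. if l = j then u else 0))) [0..<n])"
proof -
  define tr where "tr = (\<lambda>k. (\<lambda>l. if l < k then v l else 0))"
  have vR: "v i \<in> R" for i using v by (simp add: freemod_def)
  have v0: "i \<ge> n \<Longrightarrow> v i = 0" for i using v by (simp add: freemod_def)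
  have padd: "a \<in> freemod R n \<Longrightarrow> b \<in> freemod R n \<Longrightarrow> pi (a + b) = pi a + pi b" for a b
    using pi by (simp add: lin_map_def)
  have pact: "r \<in> R \<Longrightarrow> a \<in> freemod R n \<Longrightarrow> pi (\<lambda>i. mlt r (a i)) = act r (pi a)" for r a
    using pi by (simp add: lin_map_def)
  have z: "(0 :: nat \<Rightarrow> 'r) \<in> freemod R n" using R0 by (simp add: freemod_def)
  have pi0: "pi 0 = 0" using padd[OF z z] by simp
  have pi0': "pi (\<lambda>l. 0) = 0" using pi0 by (simp add: zero_fun_def)
  have "k \<le> n \<Longrightarrow> pi (tr k) = sum_list (map (\<lambda>j. act (v j) (pi (\<lambda>l. if l = j then u else 0))) [0..<k])" for k
  proof (induction k)
    case 0
    have "tr 0 = 0" by (simp add: tr_def fun_eq_iff)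
    then show ?case using pi0 pi0' by simp
  next
    case (Suc k)
    define d where "d = (\<lambda>l. if l = k then u else (0::'r))"
    have dF: "d \<in> freemod R n" using Suc.prems R0 u by (auto simp: freemod_def d_def)
    have trF: "tr k \<in> freemod R n" using R0 vR v0 by (auto simp: freemod_def tr_def)
    have mdF: "(\<lambda>i. mlt (v k) (d i)) \<in> freemod R n"
      using Suc.prems vR R0 m0 mu by (auto simp: freemod_def d_def)
    have "tr (Suc k) = tr k + (\<lambda>i. mlt (v k) (d i))"
      using vR by (auto simp: tr_def d_def fun_eq_iff mu m0 less_Suc_eq)
    then have "pi (tr (Suc k)) = pi (tr k) + act (v k) (pi d)"
      using padd[OF trF mdF] pact[OF vR dF] by simp
    then show ?case using Suc by (simp add: d_def)
  qed
  moreover have "tr n = v" using v0 by (auto simp: tr_def fun_eq_iff)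
  ultimately show ?thesis by auto
qed

lemma te_double: "tensor_eq M N R ract lact xs (xs @ xs) \<Longrightarrow> tensor_eq M N R ract lact xs []"
proof -
  assume t: "tensor_eq M N R ract lact xs (xs @ xs)"
  then have z: "(\<lambda>q. fcount xs q - fcount (xs @ xs) q) \<in> zspan (tensor_rels M N R ract lact)"
    by (simp add: tensor_eq_def)
  have e: "(\<lambda>q. - (fcount xs q - fcount (xs @ xs) q)) = (\<lambda>q. fcount xs q - fcount [] q)"
    by (simp add: fcount_def fun_eq_iff)
  have "(\<lambda>q. fcount xs q - fcount [] q) \<in> zspan (tensor_rels M N R ract lact)"
    using zspan_neg[OF z] unfolding e .
  then show ?thesis using t by (simp add: tensor_eq_def)
qed

context setting
begin

lemma B0: "0 \<in> B u"
proof -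
  have "ktensor_eq (Ac u u) sA (Hc u u) sH (rho u u 0) (rho u u 0 @ rho u u 0)"
    using rho_add[OF A0 A0, of u u] by simp
  then have 1: "ktensor_eq (Ac u u) sA (Hc u u) sH (rho u u 0) []"
    unfolding ktensor_te by (rule te_double)
  have 2: "ktensor_eq (Ac u u) sA (Hc u u) sH [(0, eH u)] []"
    unfolding ktensor_te by (rule te_zero_l[OF A0]) (simp add: klinH[unfolded klin_cat_def])
  show ?thesis using te_trans[OF 1[unfolded ktensor_te] te_sym[OF 2[unfolded ktensor_te]]] A0
    by (simp add: coinv_def ktensor_te)
qed

end

theorem proposition7p3:
  fixes Hc :: "'x \<Rightarrow> 'x \<Rightarrow> 'h::ab_group_add set" and sH :: "'k::comm_ring_1 \<Rightarrow> 'h \<Rightarrow> 'h"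
    and mH :: "'x \<Rightarrow> 'x \<Rightarrow> 'x \<Rightarrow> 'h \<Rightarrow> 'h \<Rightarrow> 'h" and eH :: "'x \<Rightarrow> 'h"
    and Delta :: "'x \<Rightarrow> 'x \<Rightarrow> 'h \<Rightarrow> ('h \<times> 'h) list" and eps :: "'x \<Rightarrow> 'x \<Rightarrow> 'h \<Rightarrow> 'k"
    and Ac :: "'x \<Rightarrow> 'x \<Rightarrow> 'a::ab_group_add set" and sA :: "'k \<Rightarrow> 'a \<Rightarrow> 'a"
    and mA :: "'x \<Rightarrow> 'x \<Rightarrow> 'x \<Rightarrow> 'a \<Rightarrow> 'a \<Rightarrow> 'a" and eA :: "'x \<Rightarrow> 'a"
    and rho :: "'x \<Rightarrow> 'x \<Rightarrow> 'a \<Rightarrow> ('a \<times> 'h) list"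
  assumes H: "semi_hopf_cat Hc sH mH eH Delta eps"
    and A: "comodule_cat Hc sH mH eH Delta eps Ac sA mA eA rho"
    and proj_A: "\<forall>x y. fg_projective (coinv Hc sH eH Ac sA rho x) (mA x x x) (Ac x y) (mA x x y)"
    and proj_H: "\<forall>x y. fg_projective (UNIV :: 'k set) (*) (Hc x y) sH"
    and delta_xy: "\<forall>x y. bij_betw (delta_map Ac mA rho x y x)
                     (Hom (UNIV :: 'k set) (Hc x y) sH (Ac y x) sA)
                     (Hom (coinv Hc sH eH Ac sA rho x) (Ac x y) (mA x x y) (Ac x x) (mA x x x))"
    and delta_yy: "\<forall>x y. bij_betw (delta_map Ac mA rho x y y)
                     (Hom (UNIV :: 'k set) (Hc x y) sH (Ac y y) sA)
                     (Hom (coinv Hc sH eH Ac sA rho x) (Ac x y) (mA x x y) (Ac x y) (mA x x y))"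
  shows "galois_cat_ext Hc sH eH Ac sA mA rho"
proof -
  interpret st: setting Hc sH mH eH Delta eps Ac sA mA eA rho
    using H A by (simp add: setting_def)
  have main: "(\<forall>xs ys. set xs \<subseteq> Ac z x \<times> Ac x y \<longrightarrow> set ys \<subseteq> Ac z x \<times> Ac x y \<longrightarrow>
           (tensor_eq (Ac z x) (Ac x y) (coinv Hc sH eH Ac sA rho x)
               (\<lambda>a b. mA z x x a b) (\<lambda>b a'. mA x x y b a') xs ys
            \<longleftrightarrow> ktensor_eq (Ac z y) sA (Hc x y) sH (can_map mA rho z x y xs) (can_map mA rho z x y ys))) \<and>
        (\<forall>zs. set zs \<subseteq> Ac z y \<times> Hc x y \<longrightarrow>
           (\<exists>xs. set xs \<subseteq> Ac z x \<times> Ac x y \<and>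
                 ktensor_eq (Ac z y) sA (Hc x y) sH (can_map mA rho z x y xs) zs))" for x y z
  proof -
    obtain n iH pH where iH: "lin_map (UNIV :: 'k set) (Hc x y) sH (freemod UNIV n) (\<lambda>r v i. r * v i) iH"
      and pH: "lin_map UNIV (freemod UNIV n) (\<lambda>r v i. r * v i) (Hc x y) sH pH"
      and ipH: "\<forall>h\<in>Hc x y. pH (iH h) = h"
      using proj_H[rule_format, of x y] unfolding fg_projective_def by blast
    obtain m iA pA where iA: "lin_map (st.B x) (Ac x y) (mA x x y) (freemod (st.B x) m) (\<lambda>r v i. mA x x x r (v i)) iA"
      and pA: "lin_map (st.B x) (freemod (st.B x) m) (\<lambda>r v i. mA x x x r (v i)) (Ac x y) (mA x x y) pA"
      and ipA: "\<forall>a\<in>Ac x y. pA (iA a) = a"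
      using proj_A[rule_format, of x y] unfolding fg_projective_def by blast
    define f where "f = (\<lambda>i h. iH h i)"
    define hb where "hb = (\<lambda>i. if i < n then pH (\<lambda>l. if l = i then 1 else 0) else 0)"
    define phi where "phi = (\<lambda>j. restrict (\<lambda>a. iA a j) (Ac x y))"
    define e where "e = (\<lambda>j. if j < m then pA (\<lambda>l. if l = j then eA x else 0) else 0)"
    define g where "g = (\<lambda>j. inv_into (Hom (UNIV :: 'k set) (Hc x y) sH (Ac y x) sA) (delta_map Ac mA rho x y x) (phi j))"
    have iH_in: "h \<in> Hc x y \<Longrightarrow> iH h \<in> freemod UNIV n" for h using iH by (simp add: lin_map_def)
    have iA_in: "a \<in> Ac x y \<Longrightarrow> iA a \<in> freemod (st.B x) m" for a using iA by (simp add: lin_map_def)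
    have f_add: "h \<in> Hc x y \<Longrightarrow> h' \<in> Hc x y \<Longrightarrow> f i (h + h') = f i h + f i h'" for h h' i
      using iH by (simp add: lin_map_def f_def)
    have f_s: "h \<in> Hc x y \<Longrightarrow> f i (sH c h) = c * f i h" for h i c
      using iH by (simp add: lin_map_def f_def)
    have hb_in: "hb i \<in> Hc x y" for i
      using pH st.H0 by (auto simp: hb_def lin_map_def freemod_def)
    have H_exp: "h \<in> Hc x y \<Longrightarrow> h = sum_list (map (\<lambda>i. sH (f i h) (hb i)) [0..<n])" for h
    proof -
      assume h: "h \<in> Hc x y"
      have "h = pH (iH h)" using ipH h by simp
      also have "\<dots> = sum_list (map (\<lambda>j. sH (iH h j) (pH (\<lambda>l. if l = j then 1 else 0))) [0..<n])"
        by (rule freemod_expand[OF pH]) (auto simp: iH_in[OF h])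
      also have "\<dots> = sum_list (map (\<lambda>i. sH (f i h) (hb i)) [0..<n])"
        by (intro arg_cong[where f = sum_list] map_cong refl) (simp add: f_def hb_def)
      finally show ?thesis .
    qed
    have phi_B: "a \<in> Ac x y \<Longrightarrow> phi j a \<in> st.B x" for a j
      using iA_in by (simp add: phi_def freemod_def)
    have e_in: "e j \<in> Ac x y" for j
      using pA st.A0 st.eA_B st.B0 by (auto simp: e_def lin_map_def freemod_def)
    have A_exp: "a \<in> Ac x y \<Longrightarrow> a = sum_list (map (\<lambda>j. mA x x y (phi j a) (e j)) [0..<m])" for a
    proof -
      assume a: "a \<in> Ac x y"
      have "a = pA (iA a)" using ipA a by simp
      also have "\<dots> = sum_list (map (\<lambda>j. mA x x y (iA a j) (pA (\<lambda>l. if l = j then eA x else 0))) [0..<m])"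
        by (rule freemod_expand[OF pA st.B0 st.eA_B]) (auto simp: iA_in[OF a] st.mA_unitr st.mA_zero_r st.B_sub)
      also have "\<dots> = sum_list (map (\<lambda>j. mA x x y (phi j a) (e j)) [0..<m])"
        using a by (intro arg_cong[where f = sum_list] map_cong refl) (simp add: phi_def e_def)
      finally show ?thesis .
    qed
    have phi_hom: "phi j \<in> Hom (st.B x) (Ac x y) (mA x x y) (Ac x x) (mA x x x)" for j
      unfolding Hom_def lin_map_def
    proof (intro CollectI conjI ballI)
      fix a assume "a \<in> Ac x y" then show "phi j a \<in> Ac x x" using phi_B st.B_sub by blast
    next
      fix a a' assume "a \<in> Ac x y" "a' \<in> Ac x y"
      then show "phi j (a + a') = phi j a + phi j a'"
        using iA by (simp add: phi_def lin_map_def st.Aadd)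
    next
      fix r a assume "r \<in> st.B x" "a \<in> Ac x y"
      then show "phi j (mA x x y r a) = mA x x x r (phi j a)"
        using iA by (simp add: phi_def lin_map_def st.mA_in st.B_sub)
    qed (simp add: phi_def)
    have bxy: "bij_betw (delta_map Ac mA rho x y x) (Hom (UNIV :: 'k set) (Hc x y) sH (Ac y x) sA)
                     (Hom (st.B x) (Ac x y) (mA x x y) (Ac x x) (mA x x x))"
      using delta_xy by blast
    have g_hom: "g j \<in> Hom (UNIV :: 'k set) (Hc x y) sH (Ac y x) sA" for j
      unfolding g_def using phi_hom[of j] bxy
      by (metis bij_betw_imp_surj_on inv_into_into)
    have g_dm: "delta_map Ac mA rho x y x (g j) = phi j" for j
      unfolding g_def using phi_hom[of j] bxy
      by (metis bij_betw_imp_surj_on f_inv_into_f)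
    have g_delta: "a \<in> Ac x y \<Longrightarrow> sum_list (map (\<lambda>(a0, h). mA x y x a0 (g j h)) (rho x y a)) = phi j a" for a j
      using fun_cong[OF g_dm[of j], of a] by (simp add: delta_map_def)
    have inj_yy: "inj_on (delta_map Ac mA rho x y y) (Hom UNIV (Hc x y) sH (Ac y y) sA)"
      using delta_yy bij_betw_imp_inj_on by blast
    have gd: "gdata Hc sH mH eH Delta eps Ac sA mA eA rho x y n f hb m phi e g"
      unfolding gdata_def gdata_axioms_def
      using H A f_add f_s hb_in H_exp phi_B e_in A_exp g_hom g_delta inj_yy
      by (simp add: setting_def)
    show ?thesis using gdata.galois_z[OF gd, of z] by simp
  qed
  show ?thesis unfolding galois_cat_ext_def using main by blast
qed


end
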